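(* For every $m\geq 0$ the following three families of objects are in bijection: (i) rooted bicolored chord diagrams with $m$ chords; (ii) bicolored ordered matchings of size $2m$; (iii) pairs $(\mathcal M_\bullet,S)$ where $\mathcal M_\bullet$ is a rooted map with $m$ edges (up to isomorphism of rooted maps) and $S$ is a quasi-tree of $\mathcal M_\bullet$.
   Context: A map is a triple $\mathcal M=(B,\sigma,\alpha)$ with $B$ finite, $\sigma,\alpha\in\mathrm{Sym}(B)$, $\alpha$ a fixed-point-free involution, $\langle\sigma,\alpha\rangle$ transitive on $B$. Edges are the cycles of $\alpha$; $\underline b=\{b,\alpha(b)\}$. A rooted map is a pair $(\mathcal M,b_\bullet)$ with $b_\bullet\in B$; rooted maps $(B,\sigma,\alpha,b_\bullet)$, $(B',\sigma',\alpha',b'_\bullet)$ are isomorphic if there is a bijection $\phi:B\to B'$ with $\sigma'=\phi\sigma\phi^{-1}$, $\alpha'=\phi\alpha\phi^{-1}$, $\phi(b_\bullet)=b'_\bullet$ (pairs $(\mathcal M_\bullet,S)$ are taken up to such isomorphisms, carrying $S$ along). The tour of a set $F$ of edges is $\tau$ with $\tau(b)=\sigma(\alpha(b))$ if $\underline b\in F$ and $\tau(b)=\sigma(b)$ otherwise; a quasi-tree is a set of edges whose tour is a single cycle on $B$. A chord diagram with $m$ chords is a set of $2m$ points on a circle partitioned into $m$ pairs (chords); it is bicolored if each chord has color $1$ or $2$, and rooted if one of the $2m$ points is distinguished; rooted bicolored chord diagrams are considered up to orientation-preserving homeomorphisms of the circle respecting chords, colors and root. A bicolored ordered matching of size $2m$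 is a perfect matching of $\{1,\dots,2m\}$ each of whose $m$ pairs is colored $1$ or $2$. *)

theory Defs
  imports "HOL-Analysis.Analysis"
begin

definition unit_circle :: "complex set" where
  "unit_circle = {z. cmod z = 1}"

definition orient_pres_circle_homeo :: "(complex \<Rightarrow> complex) \<Rightarrow> bool" where
  "orient_pres_circle_homeo h \<longleftrightarrow>
     (\<exists>h'. homeomorphism unit_circle unit_circle h h') \<and>
     (\<exists>f::real \<Rightarrow> real. continuous_on UNIV f \<and> strict_mono f \<and> (\<forall>t. f (t + 1) = f t + 1) \<and>
        (\<forall>t. h (cis (2 * pi * t)) = cis (2 * pi * f t)))"

text \<open>A chord diagram: a set of chords (2-point subsets of the circle) each with a colour
  in {1,2}, plus a root (one of the points; None only when there are no chords).\<close>
type_synonym chord_diagram = "(complex set \<times> nat) set \<times> complex option"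

definition rbcd_wf :: "nat \<Rightarrow> chord_diagram \<Rightarrow> bool" where
  "rbcd_wf m D \<longleftrightarrow> (case D of (C, r) \<Rightarrow>
     finite C \<and> card C = m \<and>
     (\<forall>(c, k) \<in> C. c \<subseteq> unit_circle \<and> card c = 2 \<and> k \<in> {1, 2}) \<and>
     (\<forall>p \<in> C. \<forall>q \<in> C. p \<noteq> q \<longrightarrow> fst p \<inter> fst q = {}) \<and>
     (case r of None \<Rightarrow> C = {} | Some x \<Rightarrow> x \<in> \<Union>(fst ` C)))"

definition rbcd_iso :: "chord_diagram \<Rightarrow> chord_diagram \<Rightarrow> bool" where
  "rbcd_iso D D' \<longleftrightarrow> (case D of (C, r) \<Rightarrow> case D' of (C', r') \<Rightarrow>
     (\<exists>h. orient_pres_circle_homeo h \<and> C' = (\<lambda>(c, k). (h ` c, k)) ` C \<and> r' = map_option h r))"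

definition rooted_bicolored_chord_diagrams :: "nat \<Rightarrow> chord_diagram set set" where
  "rooted_bicolored_chord_diagrams m =
     {{D'. rbcd_wf m D' \<and> rbcd_iso D D'} | D. rbcd_wf m D}"

definition bicolored_ordered_matchings :: "nat \<Rightarrow> (nat set \<times> nat) set set" where
  "bicolored_ordered_matchings m =
     {M. finite M \<and>
         (\<forall>(p, k) \<in> M. p \<subseteq> {1..2*m} \<and> card p = 2 \<and> k \<in> {1, 2}) \<and>
         (\<forall>p \<in> M. \<forall>q \<in> M. p \<noteq> q \<longrightarrow> fst p \<inter> fst q = {}) \<and>
         \<Union>(fst ` M) = {1..2*m}}"

definition is_map :: "nat set \<Rightarrow> (nat \<Rightarrow> nat) \<Rightarrow> (nat \<Rightarrow> nat) \<Rightarrow> bool" where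
  "is_map B \<sigma> \<alpha> \<longleftrightarrow> finite B \<and> \<sigma> permutes B \<and> \<alpha> permutes B \<and>
     (\<forall>b \<in> B. \<alpha> b \<noteq> b \<and> \<alpha> (\<alpha> b) = b) \<and>
     (\<forall>b \<in> B. \<forall>b' \<in> B. (b, b') \<in> ({(x, \<sigma> x) | x. x \<in> B} \<union> {(x, \<alpha> x) | x. x \<in> B})\<^sup>*)"

definition map_edges :: "nat set \<Rightarrow> (nat \<Rightarrow> nat) \<Rightarrow> nat set set" where
  "map_edges B \<alpha> = {{b, \<alpha> b} | b. b \<in> B}"

definition tour :: "(nat \<Rightarrow> nat) \<Rightarrow> (nat \<Rightarrow> nat) \<Rightarrow> nat set set \<Rightarrow> nat \<Rightarrow> nat" where
  "tour \<sigma> \<alpha> F b = (if {b, \<alpha> b} \<in> F then \<sigma> (\<alpha> b) else \<sigma> b)"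

definition is_quasi_tree :: "nat set \<Rightarrow> (nat \<Rightarrow> nat) \<Rightarrow> (nat \<Rightarrow> nat) \<Rightarrow> nat set set \<Rightarrow> bool" where
  "is_quasi_tree B \<sigma> \<alpha> S \<longleftrightarrow> S \<subseteq> map_edges B \<alpha> \<and>
     (\<forall>b \<in> B. \<forall>b' \<in> B. \<exists>n. (tour \<sigma> \<alpha> S ^^ n) b = b')"

type_synonym map_qt = "nat set \<times> (nat \<Rightarrow> nat) \<times> (nat \<Rightarrow> nat) \<times> nat option \<times> nat set set"

definition rmqt_wf :: "nat \<Rightarrow> map_qt \<Rightarrow> bool" where
  "rmqt_wf m X \<longleftrightarrow> (case X of (B, \<sigma>, \<alpha>, r, S) \<Rightarrow>
     is_map B \<sigma> \<alpha> \<and> card B = 2 * m \<and>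
     (case r of None \<Rightarrow> B = {} | Some b \<Rightarrow> b \<in> B) \<and>
     is_quasi_tree B \<sigma> \<alpha> S)"

definition rmqt_iso :: "map_qt \<Rightarrow> map_qt \<Rightarrow> bool" where
  "rmqt_iso X X' \<longleftrightarrow> (case X of (B, \<sigma>, \<alpha>, r, S) \<Rightarrow> case X' of (B', \<sigma>', \<alpha>', r', S') \<Rightarrow>
     (\<exists>\<phi>. bij_betw \<phi> B B' \<and> (\<forall>b \<in> B. \<sigma>' (\<phi> b) = \<phi> (\<sigma> b) \<and> \<alpha>' (\<phi> b) = \<phi> (\<alpha> b)) \<and>
        r' = map_option \<phi> r \<and> S' = (\<lambda>e. \<phi> ` e) ` S))"

definition rooted_maps_with_quasi_tree :: "nat \<Rightarrow> map_qt set set" where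
  "rooted_maps_with_quasi_tree m =
     {{X'. rmqt_wf m X' \<and> rmqt_iso X X'} | X. rmqt_wf m X}"

end

theory Submission
  imports Defs
begin


definition ee :: "real \<Rightarrow> complex" where "ee t = cis (2 * pi * t)"

lemma ee_exp: "ee t = exp (\<i> * of_real (2 * pi * t))"
  by (simp add: ee_def cis_conv_exp)

lemma ee_add: "ee (s + t) = ee s * ee t"
  by (simp add: ee_def distrib_left cis_mult)

lemma ee_int: "ee (of_int k) = 1"
proof -
  have "ee (of_int k) = exp (of_real (2 * pi * of_int k) * \<i>)" by (simp add: ee_exp mult.commute)
  also have "\<dots> = 1" using exp_integer_2pi[of "of_int k"] by (simp add: mult.commute mult.left_commute)
  finally show ?thesis .
qed

lemma ee_eq: "ee s = ee t \<longleftrightarrow> (\<exists>k::int. s = t + of_int k)"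
proof
  assume "ee s = ee t"
  then obtain n :: int where n: "\<i> * of_real (2 * pi * s) = \<i> * of_real (2 * pi * t) + (of_int (2 * n) * pi) * \<i>"
    unfolding ee_exp exp_eq by blast
  then have "\<i> * of_real (2 * pi * s) = \<i> * of_real (2 * pi * t + 2 * n * pi)"
    by (simp add: algebra_simps)
  then have "of_real (2 * pi * s) = (of_real (2 * pi * t + 2 * n * pi) :: complex)"
    by simp
  then have "2 * pi * s = 2 * pi * t + 2 * n * pi"
    using of_real_eq_iff by blast
  then have "(2 * pi) * (s - t - n) = 0" by (simp add: algebra_simps)
  then have "s = t + of_int n" using pi_gt_zero by simp
  then show "\<exists>k::int. s = t + of_int k" by blast
next
  assume "\<exists>k::int. s = t + of_int k"
  then obtain k :: int where "s = t + of_int k" by blast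
  then show "ee s = ee t" by (simp add: ee_add ee_int)
qed

lemma ee_norm [simp]: "cmod (ee t) = 1" by (simp add: ee_def)

lemma ee_circle [simp]: "ee t \<in> unit_circle" by (simp add: unit_circle_def)

lemma circle_ee: assumes "z \<in> unit_circle" shows "ee (Arg2pi z / (2 * pi)) = z"
proof -
  have "cmod z = 1" using assms by (simp add: unit_circle_def)
  then show ?thesis unfolding ee_exp using complex_norm_eq_1_exp by simp
qed

lemma circle_ee_Arg: assumes "z \<in> unit_circle" shows "ee (Arg z / (2 * pi)) = z"
proof -
  have "cmod z = 1" using assms by (simp add: unit_circle_def)
  then have "z \<noteq> 0" by auto
  then have B: "exp (\<i> * of_real (Arg z)) = z" using Arg_eq[of z] \<open>cmod z = 1\<close> by (metis mult_1 of_real_1)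
  have A: "ee (Arg z / (2 * pi)) = exp (\<i> * of_real (Arg z))" unfolding ee_exp by simp
  show ?thesis using A B by (rule trans)
qed

lemma circle_ex: "z \<in> unit_circle \<longleftrightarrow> (\<exists>t. z = ee t)"
proof
  assume "z \<in> unit_circle" then show "\<exists>t. z = ee t" using circle_ee[of z] by (intro exI[of _ "Arg2pi z / (2 * pi)"]) simp
next
  assume "\<exists>t. z = ee t" then show "z \<in> unit_circle" by auto
qed

lemma ee_cis: "cis (2 * pi * t) = ee t" by (simp add: ee_def)


definition ang :: "complex \<Rightarrow> complex \<Rightarrow> real" where
  "ang x z = Arg2pi (z / x) / (2 * pi)"

lemma circle_nz: "z \<in> unit_circle \<Longrightarrow> z \<noteq> 0"
  by (auto simp: unit_circle_def)

lemma circle_div: "x \<in> unit_circle \<Longrightarrow> z \<in> unit_circle \<Longrightarrow> z / x \<in> unit_circle"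
  by (auto simp: unit_circle_def norm_divide)

lemma circle_mult: "x \<in> unit_circle \<Longrightarrow> z \<in> unit_circle \<Longrightarrow> z * x \<in> unit_circle"
  by (auto simp: unit_circle_def norm_mult)

lemma ang_props:
  assumes "x \<in> unit_circle" "z \<in> unit_circle"
  shows "0 \<le> ang x z" "ang x z < 1" "z = x * ee (ang x z)"
proof -
  show "0 \<le> ang x z" using Arg2pi[of "z/x"] by (simp add: ang_def)
  show "ang x z < 1" using Arg2pi[of "z/x"] pi_gt_zero by (simp add: ang_def)
  have "ee (ang x z) = z / x" unfolding ang_def by (rule circle_ee[OF circle_div[OF assms]])
  then show "z = x * ee (ang x z)" using circle_nz[OF assms(1)] by simp
qed

lemma ang_unique:
  assumes "x \<in> unit_circle" "0 \<le> s" "s < 1"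
  shows "ang x (x * ee s) = s"
proof -
  have "(x * ee s) / x = ee s" using circle_nz[OF assms(1)] by simp
  moreover have "Arg2pi (ee s) = 2 * pi * s"
    by (rule Arg2pi_unique[where r=1]) (use assms pi_gt_zero in \<open>auto simp: ee_exp\<close>)
  ultimately show ?thesis by (simp add: ang_def)
qed

lemma ang_ee: "0 \<le> v - u \<Longrightarrow> v - u < 1 \<Longrightarrow> ang (ee u) (ee v) = v - u"
  using ang_unique[of "ee u" "v - u"] ee_add[of u "v - u"] by simp

lemma ang_self: "x \<in> unit_circle \<Longrightarrow> ang x x = 0"
  using ang_unique[of x 0] by (simp add: ee_def)

lemma ang_inj: "x \<in> unit_circle \<Longrightarrow> z \<in> unit_circle \<Longrightarrow> w \<in> unit_circle \<Longrightarrow> ang x z = ang x w \<Longrightarrow> z = w"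
proof -
  assume a: "x \<in> unit_circle" "z \<in> unit_circle" "w \<in> unit_circle" "ang x z = ang x w"
  have "z = x * ee (ang x z)" using ang_props(3)[OF a(1,2)] .
  also have "\<dots> = x * ee (ang x w)" using a(4) by simp
  also have "\<dots> = w" using ang_props(3)[OF a(1,3)] by (rule sym)
  finally show "z = w" .
qed

definition lift :: "(real \<Rightarrow> real) \<Rightarrow> bool" where
  "lift f \<longleftrightarrow> continuous_on UNIV f \<and> strict_mono f \<and> (\<forall>t. f (t + 1) = f t + 1)"

lemma lift_nat: "lift f \<Longrightarrow> f (t + of_nat n) = f t + of_nat n"
proof (induction n)
  case 0 then show ?case by simp
next
  case (Suc n)
  have "f (t + of_nat (Suc n)) = f ((t + of_nat n) + 1)" by (simp add: algebra_simps)
  also have "\<dots> = f (t + of_nat n) + 1" using Suc.prems by (simp add: lift_def)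
  finally show ?case using Suc by simp
qed

lemma lift_int: assumes "lift f" shows "f (t + of_int k) = f t + of_int k"
proof (cases "k \<ge> 0")
  case True
  then obtain n where "k = int n" by (metis nonneg_int_cases)
  then show ?thesis using lift_nat[OF assms] by simp
next
  case False
  define n where "n = nat (- k)"
  have n: "k = - int n" using False by (simp add: n_def)
  have "f (t + of_int k) + of_nat n = f (t + of_int k + of_nat n)" using lift_nat[OF assms] by simp
  also have "\<dots> = f t" using n by simp
  finally show ?thesis using n by simp
qed

lemma lift_ee: assumes "lift f" "ee s = ee t" shows "ee (f s) = ee (f t)"
proof -
  obtain k :: int where "s = t + of_int k" using assms(2) ee_eq by blast
  then have "f s = f t + of_int k" using lift_int[OF assms(1)] by simp
  then show ?thesis using ee_eq by blast
qed

definition hh :: "(real \<Rightarrow> real) \<Rightarrow> complex \<Rightarrow> complex" where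
  "hh f z = ee (f (Arg2pi z / (2 * pi)))"

lemma hh_ee: "lift f \<Longrightarrow> hh f (ee t) = ee (f t)"
  unfolding hh_def by (rule lift_ee) (auto simp: circle_ee)

lemma isCont_ee: "isCont ee t"
  unfolding ee_exp by (intro continuous_intros)

lemma lift_isCont: "lift f \<Longrightarrow> isCont f t"
  unfolding lift_def using continuous_on_eq_continuous_at open_UNIV by blast

lemma hh_cont: assumes "lift f" shows "continuous_on unit_circle (hh f)"
proof -
  have "continuous (at z within unit_circle) (hh f)" if z: "z \<in> unit_circle" for z
  proof (cases "z \<in> \<real>\<^sub>\<ge>\<^sub>0")
    case False
    have "isCont (\<lambda>z. Arg2pi z / (2 * pi)) z"
      by (rule isCont_divide[OF continuous_at_Arg2pi[OF False] continuous_const]) simp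
    then have "isCont (\<lambda>z. f (Arg2pi z / (2 * pi))) z" by (rule isCont_o2[OF _ lift_isCont[OF assms]])
    then have "isCont (\<lambda>z. ee (f (Arg2pi z / (2 * pi)))) z" by (rule isCont_o2[OF _ isCont_ee])
    then show ?thesis unfolding hh_def by (simp add: continuous_at_imp_continuous_within)
  next
    case True
    have "z \<noteq> 0" using circle_nz[OF z] .
    then have nz: "z \<notin> \<real>\<^sub>\<le>\<^sub>0" using True
      by (auto simp: complex_nonneg_Reals_iff complex_nonpos_Reals_iff complex_eq_iff)
    have "isCont (\<lambda>z. Arg z / (2 * pi)) z"
      by (rule isCont_divide[OF continuous_at_Arg[OF nz] continuous_const]) simp
    then have "isCont (\<lambda>z. f (Arg z / (2 * pi))) z" by (rule isCont_o2[OF _ lift_isCont[OF assms]])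
    then have "isCont (\<lambda>z. ee (f (Arg z / (2 * pi)))) z" by (rule isCont_o2[OF _ isCont_ee])
    then have c: "continuous (at z within unit_circle) (\<lambda>z. ee (f (Arg z / (2 * pi))))"
      by (simp add: continuous_at_imp_continuous_within)
    show ?thesis
    proof (rule continuous_transform_within[OF c zero_less_one z])
      fix y assume y: "y \<in> unit_circle"
      show "ee (f (Arg y / (2 * pi))) = hh f y"
        unfolding hh_def by (rule lift_ee[OF assms]) (simp add: circle_ee circle_ee_Arg y)
    qed
  qed
  then show ?thesis using continuous_on_eq_continuous_within by blast
qed

lemma lift_surj: assumes "lift f" shows "\<exists>t. f t = y"
proof -
  define n where "n = \<lceil>y - f 0\<rceil>"
  have a: "f (0 + of_int (n - 1)) = f 0 + of_int (n - 1)" using lift_int[OF assms] by blast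
  have b: "f (0 + of_int n) = f 0 + of_int n" using lift_int[OF assms] by blast
  have c: "of_int n - 1 < y - f 0" "y - f 0 \<le> of_int n" using ceiling_correct[of "y - f 0"] unfolding n_def by auto
  have "f (of_int (n - 1)) \<le> y" using a c by simp
  moreover have "y \<le> f (of_int n)" using b c by simp
  moreover have "(of_int (n - 1)::real) \<le> of_int n" by simp
  ultimately obtain t where "f t = y"
    using IVT[of f "of_int (n - 1)" y "of_int n"] lift_isCont[OF assms] by blast
  then show ?thesis by blast
qed

lemma hh_circle: "lift f \<Longrightarrow> z \<in> unit_circle \<Longrightarrow> hh f z \<in> unit_circle"
  by (simp add: hh_def)

lemma hh_image: assumes "lift f" shows "hh f ` unit_circle = unit_circle"
proof
  show "hh f ` unit_circle \<subseteq> unit_circle" using hh_circle[OF assms] by blast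
  show "unit_circle \<subseteq> hh f ` unit_circle"
  proof
    fix w assume "w \<in> unit_circle"
    then obtain s where s: "w = ee s" using circle_ex by blast
    obtain t where "f t = s" using lift_surj[OF assms] by blast
    then have "hh f (ee t) = w" using hh_ee[OF assms] s by simp
    then show "w \<in> hh f ` unit_circle" by (metis ee_circle image_eqI)
  qed
qed

lemma hh_inj: assumes "lift f" shows "inj_on (hh f) unit_circle"
proof
  fix z w assume z: "z \<in> unit_circle" and w: "w \<in> unit_circle" and e: "hh f z = hh f w"
  obtain s t where s: "z = ee s" and t: "w = ee t" using z w circle_ex by blast
  have "ee (f s) = ee (f t)" using e hh_ee[OF assms] s t by simp
  then obtain k :: int where "f s = f t + of_int k" using ee_eq by blast
  then have "f s = f (t + of_int k)" using lift_int[OF assms] by simp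
  moreover have "strict_mono f" using assms by (simp add: lift_def)
  ultimately have "s = t + of_int k" using strict_mono_eq by blast
  then show "z = w" using s t ee_eq by blast
qed

lemma compact_circle: "compact unit_circle"
proof -
  have "unit_circle = sphere 0 1" by (auto simp: unit_circle_def)
  then show ?thesis using compact_sphere[of 0 1] by metis
qed

lemma hh_orient: assumes "lift f" shows "orient_pres_circle_homeo (hh f)"
  unfolding orient_pres_circle_homeo_def
proof (intro conjI)
  show "\<exists>h'. homeomorphism unit_circle unit_circle (hh f) h'"
    by (rule homeomorphism_compact[OF compact_circle hh_cont[OF assms] hh_image[OF assms] hh_inj[OF assms]])
  show "\<exists>g. continuous_on UNIV g \<and> strict_mono g \<and> (\<forall>t. g (t + 1) = g t + 1) \<and>
        (\<forall>t. hh f (cis (2 * pi * t)) = cis (2 * pi * g t))"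
    using assms hh_ee[OF assms] by (intro exI[of _ f]) (auto simp: lift_def ee_cis)
qed


definition clmp :: "real \<Rightarrow> real" where "clmp u = max 0 (min 1 u)"

definition PL :: "(nat \<Rightarrow> real) \<Rightarrow> (nat \<Rightarrow> real) \<Rightarrow> nat \<Rightarrow> real \<Rightarrow> real" where
  "PL a b n t = (\<Sum>i<n. (b (Suc i) - b i) * clmp ((t - a i) * inverse (a (Suc i) - a i)))"

definition incr :: "(nat \<Rightarrow> real) \<Rightarrow> nat \<Rightarrow> bool" where
  "incr a n \<longleftrightarrow> (\<forall>i<n. a i < a (Suc i))"

lemma incr_le: assumes "incr a n" "i \<le> j" "j \<le> n" shows "a i \<le> a j"
  using assms(2,3)
proof (induction j)
  case 0 then show ?case by simp
next
  case (Suc j)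
  show ?case
  proof (cases "i = Suc j")
    case True then show ?thesis by simp
  next
    case False
    then have "a i \<le> a j" using Suc by simp
    also have "a j < a (Suc j)" using assms(1) Suc.prems unfolding incr_def by simp
    finally show ?thesis by simp
  qed
qed

lemma incr_less: assumes "incr a n" "i < j" "j \<le> n" shows "a i < a j"
proof -
  have "a i < a (Suc i)" using assms unfolding incr_def by simp
  also have "a (Suc i) \<le> a j" using incr_le[OF assms(1)] assms by simp
  finally show ?thesis .
qed

lemma PL_cont: "continuous_on UNIV (PL a b n)"
  unfolding PL_def clmp_def by (intro continuous_intros)

lemma PL_at: assumes "incr a n" "j \<le> n" shows "PL a b n (a j) = b j - b 0"
proof -
  have "(b (Suc i) - b i) * clmp ((a j - a i) * inverse (a (Suc i) - a i)) =
        (if i < j then b (Suc i) - b i else 0)" if i: "i < n" for i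
  proof (cases "i < j")
    case True
    have d: "a i < a (Suc i)" using assms(1) i unfolding incr_def by simp
    have "a (Suc i) \<le> a j" using incr_le[OF assms(1)] True assms(2) by simp
    then have "(a j - a i) * inverse (a (Suc i) - a i) \<ge> 1" using d by (simp add: field_simps)
    then show ?thesis using True by (simp add: clmp_def)
  next
    case False
    have d: "a i < a (Suc i)" using assms(1) i unfolding incr_def by simp
    have "a j \<le> a i" using incr_le[OF assms(1)] False i by simp
    then have "(a j - a i) * inverse (a (Suc i) - a i) \<le> 0" using d
      by (simp add: mult_nonpos_nonneg)
    then show ?thesis using False by (simp add: clmp_def)
  qed
  then have "PL a b n (a j) = (\<Sum>i<n. if i < j then b (Suc i) - b i else 0)"
    unfolding PL_def by (intro sum.cong) auto
  also have "\<dots> = (\<Sum>i\<in>{..<n} \<inter> {i. i < j}. b (Suc i) - b i)"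
    by (simp add: sum.inter_restrict)
  also have "{..<n} \<inter> {i. i < j} = {..<j}" using assms(2) by auto
  also have "(\<Sum>i<j. b (Suc i) - b i) = b j - b 0" by (rule sum_lessThan_telescope)
  finally show ?thesis .
qed

lemma find_seg: "a 0 \<le> (s::real) \<Longrightarrow> s < a n \<Longrightarrow> \<exists>i<n. a i \<le> s \<and> s < a (Suc i)"
proof (induction n)
  case 0 then have False by linarith
  then show ?case ..
next
  case (Suc n)
  show ?case
  proof (cases "s < a n")
    case True then show ?thesis using Suc by (meson less_SucI)
  next
    case False then show ?thesis using Suc.prems by (intro exI[of _ n]) auto
  qed
qed

lemma clmp_mono: "u \<le> v \<Longrightarrow> clmp u \<le> clmp v"
  by (simp add: clmp_def)

lemma PL_strict:
  assumes "incr a n" "incr b n" "a 0 \<le> s" "s < t" "t \<le> a n"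
  shows "PL a b n s < PL a b n t"
proof -
  obtain i where i: "i < n" "a i \<le> s" "s < a (Suc i)" using find_seg[of a s n] assms by auto
  let ?g = "\<lambda>t i. (b (Suc i) - b i) * clmp ((t - a i) * inverse (a (Suc i) - a i))"
  have le: "?g s j \<le> ?g t j" if "j \<in> {..<n}" for j
  proof -
    have "a j < a (Suc j)" "b j < b (Suc j)" using assms(1,2) that unfolding incr_def by auto
    then show ?thesis using assms(4)
      by (intro mult_left_mono clmp_mono) (auto intro!: mult_right_mono)
  qed
  have lt: "?g s i < ?g t i"
  proof -
    have d: "a i < a (Suc i)" "b i < b (Suc i)" using assms(1,2) i unfolding incr_def by auto
    define d1 where "d1 = inverse (a (Suc i) - a i)"
    have d1: "d1 > 0" using d by (simp add: d1_def)
    have "(s - a i) * d1 < 1" using i d unfolding d1_def by (simp add: field_simps)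
    moreover have "(s - a i) * d1 \<ge> 0" using i d1 by simp
    moreover have "(s - a i) * d1 < (t - a i) * d1" using assms(4) d1 by simp
    ultimately have "clmp ((s - a i) * d1) < clmp ((t - a i) * d1)"
      unfolding clmp_def by auto
    then show ?thesis using d unfolding d1_def by simp
  qed
  show ?thesis unfolding PL_def
    by (rule sum_strict_mono_ex1) (use le lt i in auto)
qed

definition ext01 :: "(real \<Rightarrow> real) \<Rightarrow> real \<Rightarrow> real" where
  "ext01 F t = of_int \<lfloor>t\<rfloor> + F (t - of_int \<lfloor>t\<rfloor>)"

lemma ext01_lift:
  assumes c: "continuous_on UNIV F" and sm: "\<And>s t. 0 \<le> s \<Longrightarrow> s < t \<Longrightarrow> t \<le> 1 \<Longrightarrow> F s < F t"
    and F0: "F 0 = 0" and F1: "F 1 = 1"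
  shows "lift (ext01 F)"
proof -
  have cF: "isCont F u" for u using c continuous_on_eq_continuous_at open_UNIV by blast
  have Frange: "0 \<le> F u \<and> F u < 1" if "0 \<le> u" "u < 1" for u
  proof
    show "0 \<le> F u" using sm[of 0 u] that F0 by (cases "u = 0") auto
    show "F u < 1" using sm[of u 1] that F1 by auto
  qed
  have cont: "isCont (ext01 F) x" for x
  proof -
    define n where "n = \<lfloor>x\<rfloor>"
    define G where "G t = of_int n + F (max (t - of_int n) 0) + F (min (t - of_int n + 1) 1) - 1" for t
    have c1: "continuous_on UNIV (\<lambda>t. F (max (t - of_int n) 0))"
      by (rule continuous_on_compose2[OF c]) (intro continuous_intros, simp)
    have c2: "continuous_on UNIV (\<lambda>t. F (min (t - of_int n + 1) 1))"
      by (rule continuous_on_compose2[OF c]) (intro continuous_intros, simp)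
    have "continuous_on UNIV G" unfolding G_def
      by (intro continuous_on_diff continuous_on_add continuous_on_const c1 c2)
    then have cG: "isCont G x" using continuous_on_eq_continuous_at open_UNIV by blast
    have eq: "G t = ext01 F t" if "dist t x < min (x - (of_int n - 1)) (of_int n + 1 - x)" for t
    proof -
      have t: "of_int n - 1 < t" "t < of_int n + 1" using that unfolding dist_real_def by auto
      show ?thesis
      proof (cases "t < of_int n")
        case True
        then have fl: "\<lfloor>t\<rfloor> = n - 1" using t by linarith
        have mm: "max (t - of_int n) 0 = 0" "min (t - of_int n + 1) 1 = t - of_int n + 1" using True by auto
        have e1: "t - of_int (n - 1) = t - of_int n + 1" by simp
        have "ext01 F t = of_int (n - 1) + F (t - of_int n + 1)" unfolding ext01_def fl e1 by simp
        moreover have "G t = of_int n + F 0 + F (t - of_int n + 1) - 1" unfolding G_def mm by simp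
        ultimately show ?thesis using F0 by simp
      next
        case False
        then have "\<lfloor>t\<rfloor> = n" using t by linarith
        moreover have "max (t - of_int n) 0 = t - of_int n" "min (t - of_int n + 1) 1 = 1" using False by auto
        ultimately show ?thesis unfolding G_def ext01_def using F1 by (simp add: algebra_simps)
      qed
    qed
    have pos: "0 < min (x - (of_int n - 1)) (of_int n + 1 - x)" unfolding n_def by linarith
    show ?thesis
      by (rule continuous_transform_within[OF cG pos UNIV_I]) (use eq in blast)
  qed
  have smono: "strict_mono (ext01 F)"
  proof (rule strict_monoI)
    fix s t :: real assume st: "s < t"
    show "ext01 F s < ext01 F t"
    proof (cases "\<lfloor>s\<rfloor> = \<lfloor>t\<rfloor>")
      case True
      have "F (s - of_int \<lfloor>s\<rfloor>) < F (t - of_int \<lfloor>t\<rfloor>)"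
        using True st by (intro sm) linarith+
      then show ?thesis unfolding ext01_def using True by simp
    next
      case False
      have "\<lfloor>s\<rfloor> \<le> \<lfloor>t\<rfloor>" by (rule floor_mono) (use st in simp)
      then have "\<lfloor>s\<rfloor> + 1 \<le> \<lfloor>t\<rfloor>" using False by linarith
      moreover have "F (s - of_int \<lfloor>s\<rfloor>) < 1" using Frange[of "s - of_int \<lfloor>s\<rfloor>"] by linarith
      moreover have "0 \<le> F (t - of_int \<lfloor>t\<rfloor>)" using Frange[of "t - of_int \<lfloor>t\<rfloor>"] by linarith
      ultimately show ?thesis unfolding ext01_def by linarith
    qed
  qed
  have shift: "ext01 F (t + 1) = ext01 F t + 1" for t
    unfolding ext01_def by simp
  show ?thesis unfolding lift_def
    using cont smono shift continuous_at_imp_continuous_on by blast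
qed

lemma lift_conj: assumes "lift f" shows "lift (\<lambda>t. \<beta> + f (t - \<alpha>))"
proof -
  have "continuous_on UNIV (\<lambda>t. \<beta> + f (t - \<alpha>))"
  proof -
    have "isCont (\<lambda>t. f (t - \<alpha>)) t" for t
      by (rule isCont_o2[OF _ lift_isCont[OF assms]]) (intro continuous_intros)
    then show ?thesis by (intro continuous_at_imp_continuous_on ballI continuous_intros) auto
  qed
  moreover have "strict_mono (\<lambda>t. \<beta> + f (t - \<alpha>))"
    using assms unfolding lift_def strict_mono_def by auto
  moreover have "\<forall>t. \<beta> + f (t + 1 - \<alpha>) = \<beta> + f (t - \<alpha>) + 1"
  proof
    fix t
    have "t + 1 - \<alpha> = (t - \<alpha>) + 1" by simp
    moreover have "f (t - \<alpha> + 1) = f (t - \<alpha>) + 1" using assms unfolding lift_def by blast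
    moreover have "f (t + 1 - \<alpha>) = f (t - \<alpha> + 1)" by (rule arg_cong[where f=f]) simp
    ultimately show "\<beta> + f (t + 1 - \<alpha>) = \<beta> + f (t - \<alpha>) + 1" by linarith
  qed
  ultimately show ?thesis unfolding lift_def by simp
qed


definition rnk :: "('a \<Rightarrow> real) \<Rightarrow> 'a set \<Rightarrow> 'a \<Rightarrow> nat" where
  "rnk g P z = card {w \<in> P. g w < g z} + 1"

lemma rnk_less: assumes "finite P" "w \<in> P" "z \<in> P" "g w < g z" shows "rnk g P w < rnk g P z"
proof -
  have "{v \<in> P. g v < g w} \<subset> {v \<in> P. g v < g z}" using assms by auto
  then show ?thesis unfolding rnk_def using assms(1) by (simp add: psubset_card_mono)
qed

lemma rnk_range: assumes "finite P" "z \<in> P" shows "rnk g P z \<in> {1..card P}"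
proof -
  have "{v \<in> P. g v < g z} \<subseteq> P - {z}" by auto
  then have "card {v \<in> P. g v < g z} \<le> card (P - {z})" using assms(1) by (intro card_mono) auto
  also have "\<dots> = card P - 1" using assms by simp
  finally show ?thesis unfolding rnk_def using assms card_gt_0_iff[of P] by auto
qed

lemma rnk_less_iff: assumes "finite P" "inj_on g P" "w \<in> P" "z \<in> P"
  shows "rnk g P w < rnk g P z \<longleftrightarrow> g w < g z"
proof
  assume a: "rnk g P w < rnk g P z"
  show "g w < g z"
  proof (rule ccontr)
    assume "\<not> g w < g z"
    then have "g z < g w \<or> g z = g w" by auto
    then show False
    proof
      assume "g z < g w" then show False using rnk_less[OF assms(1,4,3), where g=g] a by auto
    next
      assume "g z = g w" then have "z = w" using assms(2-4) inj_on_def by metis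
      then show False using a by simp
    qed
  qed
qed (rule rnk_less[OF assms(1,3,4), where g=g])

lemma rnk_inj: assumes "finite P" "inj_on g P" shows "inj_on (rnk g P) P"
proof
  fix w z assume w: "w \<in> P" and z: "z \<in> P" and e: "rnk g P w = rnk g P z"
  show "w = z"
  proof (rule ccontr)
    assume "w \<noteq> z"
    then have "g w \<noteq> g z" using assms(2) w z inj_on_def by metis
    then have "g w < g z \<or> g z < g w" by auto
    then show False using rnk_less[OF assms(1) w z, where g=g] rnk_less[OF assms(1) z w, where g=g] e by auto
  qed
qed

lemma rnk_bij: assumes "finite P" "inj_on g P" shows "bij_betw (rnk g P) P {1..card P}"
proof -
  have i: "inj_on (rnk g P) P" by (rule rnk_inj[OF assms])
  have s: "rnk g P ` P \<subseteq> {1..card P}" using rnk_range[OF assms(1)] by blast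
  have "card (rnk g P ` P) = card {1..card P}" using card_image[OF i] by simp
  then have "rnk g P ` P = {1..card P}" using s by (intro card_subset_eq) auto
  then show ?thesis using i unfolding bij_betw_def by blast
qed

lemma rnk_image: assumes "finite P" "inj_on g P" shows "rnk g P ` P = {1..card P}"
  using rnk_bij[OF assms] unfolding bij_betw_def by blast

lemma rnk_transfer:
  assumes "inj_on \<psi> P" "P' = \<psi> ` P" "z \<in> P"
    and ord: "\<And>w. w \<in> P \<Longrightarrow> g' (\<psi> w) < g' (\<psi> z) \<longleftrightarrow> g w < g z"
  shows "rnk g' P' (\<psi> z) = rnk g P z"
proof -
  have "{w' \<in> P'. g' w' < g' (\<psi> z)} = \<psi> ` {w \<in> P. g w < g z}"
    using assms(2) ord by auto
  moreover have "inj_on \<psi> {w \<in> P. g w < g z}" using assms(1) by (rule inj_on_subset) auto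
  ultimately show ?thesis unfolding rnk_def by (simp add: card_image)
qed

lemma class_bij:
  assumes rd_in: "\<And>X. WF X \<Longrightarrow> rd X \<in> T"
    and iso_iff: "\<And>X Y. WF X \<Longrightarrow> WF Y \<Longrightarrow> ISO X Y \<longleftrightarrow> rd X = rd Y"
    and surj: "\<And>M. M \<in> T \<Longrightarrow> \<exists>X. WF X \<and> rd X = M"
  shows "\<exists>f. bij_betw f {{Y. WF Y \<and> ISO X Y} | X. WF X} T"
proof -
  define cls where "cls X = {Y. WF Y \<and> ISO X Y}" for X
  have cls_eq: "cls X = {Y. WF Y \<and> rd Y = rd X}" if "WF X" for X
    unfolding cls_def using iso_iff[OF that] by auto
  define f where "f K = rd (SOME X. X \<in> K)" for K
  have fcls: "f (cls X) = rd X" if "WF X" for X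
  proof -
    have "X \<in> cls X" using cls_eq[OF that] that by simp
    then have "(SOME Y. Y \<in> cls X) \<in> cls X" by (rule someI)
    then show ?thesis unfolding f_def using cls_eq[OF that] by simp
  qed
  have A: "{{Y. WF Y \<and> ISO X Y} | X. WF X} = cls ` {X. WF X}" unfolding cls_def by auto
  have "bij_betw f (cls ` {X. WF X}) T"
    unfolding bij_betw_def
  proof
    show "inj_on f (cls ` {X. WF X})"
    proof
      fix K L assume "K \<in> cls ` {X. WF X}" "L \<in> cls ` {X. WF X}" "f K = f L"
      then obtain X Y where X: "WF X" "K = cls X" and Y: "WF Y" "L = cls Y" and e: "f K = f L" by blast
      then have "rd X = rd Y" using fcls by simp
      then show "K = L" using X Y cls_eq by simp
    qed
    show "f ` cls ` {X. WF X} = T"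
    proof
      show "f ` cls ` {X. WF X} \<subseteq> T" using fcls rd_in by auto
      show "T \<subseteq> f ` cls ` {X. WF X}"
      proof
        fix M assume "M \<in> T"
        then obtain X where "WF X" "rd X = M" using surj by blast
        then show "M \<in> f ` cls ` {X. WF X}" using fcls by (metis image_eqI mem_Collect_eq)
      qed
    qed
  qed
  then show ?thesis unfolding A by blast
qed


lemma pairs_card:
  fixes C :: "('a set \<times> nat) set"
  assumes fin: "finite C" and c2: "\<And>c k. (c, k) \<in> C \<Longrightarrow> card c = 2"
    and disj: "\<And>p q. p \<in> C \<Longrightarrow> q \<in> C \<Longrightarrow> p \<noteq> q \<Longrightarrow> fst p \<inter> fst q = {}"
  shows "card (\<Union>(fst ` C)) = 2 * card C" "finite (\<Union>(fst ` C))"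
proof -
  have ne: "fst p \<noteq> {}" if "p \<in> C" for p
    using c2[of "fst p" "snd p"] that by (cases p) auto
  have finc: "finite (fst p)" if "p \<in> C" for p
    using c2[of "fst p" "snd p"] that by (cases p) (auto intro: card_ge_0_finite)
  have inj: "inj_on fst C"
  proof
    fix p q assume "p \<in> C" "q \<in> C" "fst p = fst q"
    then show "p = q" using disj[of p q] ne[of p] by auto
  qed
  have pw: "pairwise disjnt (fst ` C)"
    unfolding pairwise_def disjnt_def using disj by fastforce
  have "card (\<Union>(fst ` C)) = sum card (fst ` C)"
    by (rule card_Union_disjoint[OF pw]) (use finc in auto)
  also have "\<dots> = sum (\<lambda>p. card (fst p)) C" by (rule sum.reindex[OF inj, unfolded o_def])
  also have "\<dots> = sum (\<lambda>p. 2) C" by (rule sum.cong) (auto intro: c2)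
  finally show "card (\<Union>(fst ` C)) = 2 * card C" by simp
  show "finite (\<Union>(fst ` C))" using fin finc by auto
qed

lemma matching_props:
  assumes "M \<in> bicolored_ordered_matchings m"
  shows "finite M" "\<And>p k. (p, k) \<in> M \<Longrightarrow> p \<subseteq> {1..2*m} \<and> card p = 2 \<and> k \<in> {1, 2}"
    "\<And>p q. p \<in> M \<Longrightarrow> q \<in> M \<Longrightarrow> p \<noteq> q \<Longrightarrow> fst p \<inter> fst q = {}"
    "\<Union>(fst ` M) = {1..2*m}" "card M = m"
proof -
  have P: "finite M \<and>
         (\<forall>(p, k) \<in> M. p \<subseteq> {1..2*m} \<and> card p = 2 \<and> k \<in> {1, 2}) \<and>
         (\<forall>p \<in> M. \<forall>q \<in> M. p \<noteq> q \<longrightarrow> fst p \<inter> fst q = {}) \<and>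
         \<Union>(fst ` M) = {1..2*m}" using assms unfolding bicolored_ordered_matchings_def mem_Collect_eq .
  show f: "finite M" using P by (rule conjunct1)
  have P2: "\<forall>(p, k) \<in> M. p \<subseteq> {1..2*m} \<and> card p = 2 \<and> k \<in> {1, 2}" using P by (elim conjE)
  show a: "\<And>p k. (p, k) \<in> M \<Longrightarrow> p \<subseteq> {1..2*m} \<and> card p = 2 \<and> k \<in> {1, 2}"
  proof -
    fix p k assume "(p, k) \<in> M"
    from bspec[OF P2 this] show "p \<subseteq> {1..2*m} \<and> card p = 2 \<and> k \<in> {1, 2}" by simp
  qed
  have P3: "\<forall>p \<in> M. \<forall>q \<in> M. p \<noteq> q \<longrightarrow> fst p \<inter> fst q = {}" using P by (elim conjE)
  show d: "\<And>p q. p \<in> M \<Longrightarrow> q \<in> M \<Longrightarrow> p \<noteq> q \<Longrightarrow> fst p \<inter> fst q = {}"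
    using P3 by blast
  show u: "\<Union>(fst ` M) = {1..2*m}" using P by (elim conjE)
  have "card (\<Union>(fst ` M)) = 2 * card M" by (rule pairs_card(1)[OF f]) (use a d in auto)
  then show "card M = m" using u by simp
qed

lemma wf_props:
  assumes "rbcd_wf m (C, r)"
  shows "finite C" "card C = m" "\<And>c k. (c, k) \<in> C \<Longrightarrow> c \<subseteq> unit_circle \<and> card c = 2 \<and> k \<in> {1, 2}"
    "\<And>p q. p \<in> C \<Longrightarrow> q \<in> C \<Longrightarrow> p \<noteq> q \<Longrightarrow> fst p \<inter> fst q = {}"
    "r = None \<Longrightarrow> C = {}" "\<And>x. r = Some x \<Longrightarrow> x \<in> \<Union>(fst ` C)"
proof -
  have P: "finite C \<and> card C = m \<and>
     (\<forall>(c, k) \<in> C. c \<subseteq> unit_circle \<and> card c = 2 \<and> k \<in> {1, 2}) \<and>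
     (\<forall>p \<in> C. \<forall>q \<in> C. p \<noteq> q \<longrightarrow> fst p \<inter> fst q = {}) \<and>
     (case r of None \<Rightarrow> C = {} | Some x \<Rightarrow> x \<in> \<Union>(fst ` C))"
    using assms unfolding rbcd_wf_def prod.case .
  show "finite C" using P by (elim conjE)
  show "card C = m" using P by (elim conjE)
  have P2: "\<forall>(c, k) \<in> C. c \<subseteq> unit_circle \<and> card c = 2 \<and> k \<in> {1, 2}" using P by (elim conjE)
  show "\<And>c k. (c, k) \<in> C \<Longrightarrow> c \<subseteq> unit_circle \<and> card c = 2 \<and> k \<in> {1, 2}"
  proof -
    fix c k assume "(c, k) \<in> C"
    from bspec[OF P2 this] show "c \<subseteq> unit_circle \<and> card c = 2 \<and> k \<in> {1, 2}" by simp
  qed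
  have P3: "\<forall>p \<in> C. \<forall>q \<in> C. p \<noteq> q \<longrightarrow> fst p \<inter> fst q = {}" using P by (elim conjE)
  show "\<And>p q. p \<in> C \<Longrightarrow> q \<in> C \<Longrightarrow> p \<noteq> q \<Longrightarrow> fst p \<inter> fst q = {}"
    using P3 by blast
  have P4: "case r of None \<Rightarrow> C = {} | Some x \<Rightarrow> x \<in> \<Union>(fst ` C)" using P by (elim conjE)
  show "r = None \<Longrightarrow> C = {}" using P4 by simp
  show "\<And>x. r = Some x \<Longrightarrow> x \<in> \<Union>(fst ` C)" using P4 by simp
qed

lemma Union_fst_img: "\<Union>(fst ` (\<lambda>(c, k). (f ` c, k)) ` C) = f ` \<Union>(fst ` C)"
proof -
  have "fst ` (\<lambda>(c, k). (f ` c, k)) ` C = (\<lambda>c. f ` c) ` fst ` C" by (simp add: image_image case_prod_beta)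
  then show ?thesis by (simp add: image_UN image_image)
qed

lemma sub_pts: "(c, k) \<in> C \<Longrightarrow> c \<subseteq> \<Union>(fst ` C)"
  by (metis Union_upper fst_conv image_eqI)

definition pts :: "(complex set \<times> nat) set \<Rightarrow> complex set" where
  "pts C = \<Union>(fst ` C)"

lemma wf_pts:
  assumes "rbcd_wf m (C, r)"
  shows "finite (pts C)" "card (pts C) = 2 * m" "pts C \<subseteq> unit_circle"
proof -
  note w = wf_props[OF assms]
  show "finite (pts C)" unfolding pts_def using pairs_card[OF w(1)] w(3,4) by blast
  show "card (pts C) = 2 * m" unfolding pts_def using pairs_card[OF w(1)] w(2,3,4) by metis
  show "pts C \<subseteq> unit_circle" unfolding pts_def using w(3) by fastforce
qed

lemma ang_inj_on: "x \<in> unit_circle \<Longrightarrow> P \<subseteq> unit_circle \<Longrightarrow> inj_on (ang x) P"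
  unfolding inj_on_def using ang_inj by blast

definition readc :: "chord_diagram \<Rightarrow> (nat set \<times> nat) set" where
  "readc D = (case D of (C, r) \<Rightarrow> (case r of None \<Rightarrow> {}
      | Some x \<Rightarrow> (\<lambda>(c, k). (rnk (ang x) (pts C) ` c, k)) ` C))"

lemma readc_in:
  assumes wf: "rbcd_wf m D"
  shows "readc D \<in> bicolored_ordered_matchings m"
proof -
  obtain C r where D: "D = (C, r)" by (cases D)
  note w = wf_props[OF wf[unfolded D]]
  note wp = wf_pts[OF wf[unfolded D]]
  show ?thesis
  proof (cases r)
    case None
    then have "C = {}" using w(5) by simp
    then have "m = 0" using w(2) by simp
    then show ?thesis using None unfolding D readc_def bicolored_ordered_matchings_def by simp
  next
    case (Some x)
    have xc: "x \<in> unit_circle" using w(6)[OF Some] wp(3) unfolding pts_def by blast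
    define P where "P = pts C"
    define R where "R = rnk (ang x) P"
    have injg: "inj_on (ang x) P" unfolding P_def by (rule ang_inj_on[OF xc wp(3)])
    have injR: "inj_on R P" unfolding R_def by (rule rnk_inj[OF wp(1)[folded P_def] injg])
    have imR: "R ` P = {1..2*m}" unfolding R_def using rnk_image[OF wp(1)[folded P_def] injg] wp(2) P_def by simp
    have sub: "c \<subseteq> P" if "(c, k) \<in> C" for c k using that unfolding P_def pts_def by (rule sub_pts)
    have rd: "readc D = (\<lambda>(c, k). (R ` c, k)) ` C" unfolding D readc_def Some R_def P_def by simp
    show ?thesis unfolding rd bicolored_ordered_matchings_def
    proof (intro CollectI conjI)
      show "finite ((\<lambda>(c, k). (R ` c, k)) ` C)" using w(1) by simp
      show "\<forall>(p, k) \<in> (\<lambda>(c, k). (R ` c, k)) ` C. p \<subseteq> {1..2*m} \<and> card p = 2 \<and> k \<in> {1, 2}"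
      proof (clarify)
        fix c k assume ck: "(c, k) \<in> C"
        have "R ` c \<subseteq> {1..2*m}" using sub[OF ck] imR by blast
        moreover have "card (R ` c) = 2" using card_image[OF inj_on_subset[OF injR sub[OF ck]]] w(3)[OF ck] by simp
        ultimately show "R ` c \<subseteq> {1..2*m} \<and> card (R ` c) = 2 \<and> k \<in> {1, 2}" using w(3)[OF ck] by blast
      qed
      show "\<forall>p \<in> (\<lambda>(c, k). (R ` c, k)) ` C. \<forall>q \<in> (\<lambda>(c, k). (R ` c, k)) ` C. p \<noteq> q \<longrightarrow> fst p \<inter> fst q = {}"
      proof (intro ballI impI)
        fix p q assume p: "p \<in> (\<lambda>(c, k). (R ` c, k)) ` C" and q: "q \<in> (\<lambda>(c, k). (R ` c, k)) ` C" and ne: "p \<noteq> q"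
        obtain c k where ck: "(c, k) \<in> C" "p = (R ` c, k)" using p by auto
        obtain c' k' where ck': "(c', k') \<in> C" "q = (R ` c', k')" using q by auto
        have "(c, k) \<noteq> (c', k')" using ne ck ck' by auto
        then have "c \<inter> c' = {}" using w(4)[OF ck(1) ck'(1)] by simp
        then have "R ` c \<inter> R ` c' = {}" using inj_on_image_Int[OF injR sub[OF ck(1)] sub[OF ck'(1)]] by simp
        then show "fst p \<inter> fst q = {}" using ck ck' by simp
      qed
      have "\<Union>(fst ` (\<lambda>(c, k). (R ` c, k)) ` C) = R ` P" unfolding P_def pts_def by (rule Union_fst_img)
      then show "\<Union>(fst ` (\<lambda>(c, k). (R ` c, k)) ` C) = {1..2*m}" using imR by simp
    qed
  qed
qed

definition ptm :: "nat \<Rightarrow> nat \<Rightarrow> complex" where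
  "ptm m j = ee (real (j - 1) / real (2 * m))"

lemma ang_ptm: assumes "j \<in> {1..2*m}" shows "ang (ptm m 1) (ptm m j) = real (j - 1) / real (2 * m)"
proof -
  have "ptm m 1 = ee 0" by (simp add: ptm_def)
  moreover have "0 \<le> real (j - 1) / real (2 * m)" by simp
  moreover have "real (j - 1) / real (2 * m) < 1" using assms by (simp add: field_simps)
  moreover have "ang (ee 0) (ee (real (j - 1) / real (2 * m))) = real (j - 1) / real (2 * m) - 0"
    by (rule ang_ee) (use calculation in simp_all)
  ultimately show ?thesis unfolding ptm_def by simp
qed

lemma ptm_circle: "ptm m j \<in> unit_circle" by (simp add: ptm_def)

lemma ptm_less: assumes "i \<in> {1..2*m}" "j \<in> {1..2*m}"
  shows "ang (ptm m 1) (ptm m i) < ang (ptm m 1) (ptm m j) \<longleftrightarrow> i < j"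
proof -
  have m: "m > 0" using assms by auto
  have "real (i - 1) / real (2 * m) < real (j - 1) / real (2 * m) \<longleftrightarrow> real (i - 1) < real (j - 1)"
    using m by (simp add: divide_strict_right_mono_neg divide_less_cancel)
  also have "\<dots> \<longleftrightarrow> i < j" using assms by auto
  finally show ?thesis using ang_ptm[OF assms(1)] ang_ptm[OF assms(2)] by simp
qed

lemma ptm_inj: "inj_on (ptm m) {1..2*m}"
proof
  fix i j assume i: "i \<in> {1..2*m}" and j: "j \<in> {1..2*m}" and e: "ptm m i = ptm m j"
  show "i = j" using ptm_less[OF i j] ptm_less[OF j i] e by (metis linorder_neqE_nat less_irrefl)
qed

lemma rnk_ptm: assumes "j \<in> {1..2*m}"
  shows "rnk (ang (ptm m 1)) (ptm m ` {1..2*m}) (ptm m j) = j"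
proof -
  have "{w \<in> ptm m ` {1..2*m}. ang (ptm m 1) w < ang (ptm m 1) (ptm m j)} = ptm m ` {1..<j}"
  proof
    show "{w \<in> ptm m ` {1..2*m}. ang (ptm m 1) w < ang (ptm m 1) (ptm m j)} \<subseteq> ptm m ` {1..<j}"
      using ptm_less[OF _ assms] by fastforce
    show "ptm m ` {1..<j} \<subseteq> {w \<in> ptm m ` {1..2*m}. ang (ptm m 1) w < ang (ptm m 1) (ptm m j)}"
    proof
      fix w assume "w \<in> ptm m ` {1..<j}"
      then obtain i where i: "i \<in> {1..<j}" "w = ptm m i" by blast
      then have i2: "i \<in> {1..2*m}" using assms by auto
      then show "w \<in> {w \<in> ptm m ` {1..2*m}. ang (ptm m 1) w < ang (ptm m 1) (ptm m j)}"
        using ptm_less[OF i2 assms] i by auto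
    qed
  qed
  moreover have "card (ptm m ` {1..<j}) = j - 1"
  proof -
    have "{1..<j} \<subseteq> {1..2*m}" using assms by (simp add: subset_iff)
    then show ?thesis using card_image[OF inj_on_subset[OF ptm_inj[of m]]] by simp
  qed
  ultimately show ?thesis unfolding rnk_def using assms by simp
qed

lemma readc_surj:
  assumes M: "M \<in> bicolored_ordered_matchings m"
  shows "\<exists>D. rbcd_wf m D \<and> readc D = M"
proof (cases "m = 0")
  case True
  have "M = {}"
  proof (rule ccontr)
    assume "M \<noteq> {}"
    then obtain p k where "(p, k) \<in> M" by auto
    then have "p \<subseteq> {}" "card p = 2" using matching_props(2)[OF M] True by auto
    then show False by simp
  qed
  then show ?thesis using True by (intro exI[of _ "({}, None)"]) (simp add: rbcd_wf_def readc_def)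
next
  case False
  note mp = matching_props[OF M]
  define pt where "pt = ptm m"
  define Phi where "Phi = (\<lambda>(p::nat set, k::nat). (pt ` p, k))"
  define C where "C = Phi ` M"
  define x where "x = pt 1"
  have sub: "p \<subseteq> {1..2*m}" if "(p, k) \<in> M" for p k using mp(2)[OF that] by blast
  have injpt: "inj_on pt {1..2*m}" unfolding pt_def by (rule ptm_inj)
  have ptsC: "pts C = pt ` {1..2*m}" unfolding pts_def C_def Phi_def Union_fst_img mp(4) ..
  have injPhi: "inj_on Phi M"
  proof
    fix a b assume a: "a \<in> M" and b: "b \<in> M" and e: "Phi a = Phi b"
    obtain p k where pk: "a = (p, k)" by (cases a)
    obtain q l where ql: "b = (q, l)" by (cases b)
    have "pt ` p = pt ` q" "k = l" using e unfolding pk ql Phi_def by auto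
    then have "p = q" using inj_on_image_eq_iff[OF injpt sub sub] a b pk ql by metis
    then show "a = b" using pk ql \<open>k = l\<close> by simp
  qed
  have wf: "rbcd_wf m (C, Some x)" unfolding rbcd_wf_def
  proof (simp only: prod.case option.case, intro conjI)
    show "finite C" unfolding C_def using mp(1) by simp
    show "card C = m" unfolding C_def using card_image[OF injPhi] mp(5) by simp
    show "\<forall>(c, k) \<in> C. c \<subseteq> unit_circle \<and> card c = 2 \<and> k \<in> {1, 2}"
    proof (clarify)
      fix c k assume "(c, k) \<in> C"
      then obtain p where p: "(p, k) \<in> M" "c = pt ` p" unfolding C_def Phi_def by auto
      have "card c = 2" using p card_image[OF inj_on_subset[OF injpt sub[OF p(1)]]] mp(2)[OF p(1)] by simp
      then show "c \<subseteq> unit_circle \<and> card c = 2 \<and> k \<in> {1, 2}" using p mp(2)[OF p(1)] ptm_circle unfolding pt_def by blast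
    qed
    show "\<forall>p \<in> C. \<forall>q \<in> C. p \<noteq> q \<longrightarrow> fst p \<inter> fst q = {}"
    proof (intro ballI impI)
      fix pp qq assume pp: "pp \<in> C" and qq: "qq \<in> C" and ne0: "pp \<noteq> qq"
      obtain c k where ck: "(c, k) \<in> C" "pp = (c, k)" by (cases pp) (use pp in auto)
      obtain c' k' where ck': "(c', k') \<in> C" "qq = (c', k')" by (cases qq) (use qq in auto)
      have ne: "(c, k) \<noteq> (c', k')" using ne0 ck ck' by simp
      obtain p where p: "(p, k) \<in> M" "c = pt ` p" using ck(1) unfolding C_def Phi_def by auto
      obtain p' where p': "(p', k') \<in> M" "c' = pt ` p'" using ck'(1) unfolding C_def Phi_def by auto
      have "(p, k) \<noteq> (p', k')" using ne p p' by auto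
      then have "p \<inter> p' = {}" using mp(3)[OF p(1) p'(1)] by simp
      then have "c \<inter> c' = {}" using inj_on_image_Int[OF injpt sub[OF p(1)] sub[OF p'(1)]] p p' by simp
      then show "fst pp \<inter> fst qq = {}" using ck ck' by simp
    qed
    have "1 \<in> {1..2*m}" using False by simp
    then have "x \<in> pts C" unfolding ptsC x_def by blast
    then show "x \<in> \<Union>(fst ` C)" unfolding pts_def .
  qed
  have rk: "rnk (ang x) (pts C) (pt j) = j" if "j \<in> {1..2*m}" for j
    unfolding ptsC x_def pt_def by (rule rnk_ptm[OF that])
  have "readc (C, Some x) = (\<lambda>(c, k). (rnk (ang x) (pts C) ` c, k)) ` Phi ` M"
    unfolding readc_def C_def by simp
  also have "\<dots> = (\<lambda>(p, k). (p, k)) ` M"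
    unfolding image_image
  proof (rule image_cong[OF refl])
    fix a assume a: "a \<in> M"
    obtain p k where pk: "a = (p, k)" by (cases a)
    have "rnk (ang x) (pts C) ` pt ` p = id ` p"
      unfolding image_image using rk sub[OF a[unfolded pk]] by (intro image_cong) auto
    then have "rnk (ang x) (pts C) ` pt ` p = p" by simp
    then show "(\<lambda>(c, k). (rnk (ang x) (pts C) ` c, k)) (Phi a) = (\<lambda>(p, k). (p, k)) a"
      unfolding pk Phi_def by simp
  qed
  also have "\<dots> = M" by simp
  finally show ?thesis using wf by blast
qed


lemma orient_lift:
  assumes "orient_pres_circle_homeo h"
  shows "\<exists>f. lift f \<and> (\<forall>t. h (ee t) = ee (f t))" "inj_on h unit_circle"
proof -
  obtain h' where hm: "homeomorphism unit_circle unit_circle h h'"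
    using assms unfolding orient_pres_circle_homeo_def by blast
  obtain f where f: "continuous_on UNIV f" "strict_mono f" "\<forall>t. f (t + 1) = f t + 1"
    "\<forall>t. h (cis (2 * pi * t)) = cis (2 * pi * f t)"
    using assms unfolding orient_pres_circle_homeo_def by blast
  show "\<exists>f. lift f \<and> (\<forall>t. h (ee t) = ee (f t))"
    using f by (intro exI[of _ f]) (simp add: lift_def ee_cis)
  have "\<forall>x\<in>unit_circle. h' (h x) = x" using hm unfolding homeomorphism_def by blast
  then show "inj_on h unit_circle" by (metis inj_onI)
qed

lemma ang_lift:
  assumes f: "lift f" and hf: "\<And>t. h (ee t) = ee (f t)" and x: "x \<in> unit_circle" and w: "w \<in> unit_circle"
  shows "ang (h x) (h w) = f (Arg2pi x / (2 * pi) + ang x w) - f (Arg2pi x / (2 * pi))"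
proof -
  define \<alpha> where "\<alpha> = Arg2pi x / (2 * pi)"
  define s where "s = ang x w"
  have xa: "x = ee \<alpha>" unfolding \<alpha>_def using circle_ee[OF x] by simp
  have s: "0 \<le> s" "s < 1" unfolding s_def using ang_props[OF x w] by auto
  have "w = x * ee s" unfolding s_def using ang_props[OF x w] by simp
  then have ws: "w = ee (\<alpha> + s)" using xa ee_add by simp
  have sm: "strict_mono f" using f by (simp add: lift_def)
  have le: "f \<alpha> \<le> f (\<alpha> + s)"
  proof (cases "s = 0")
    case True then show ?thesis by simp
  next
    case False then have "\<alpha> < \<alpha> + s" using s by simp
    then show ?thesis using sm strict_mono_less by (metis less_imp_le)
  qed
  have "f (\<alpha> + s) < f (\<alpha> + 1)" using sm s by (simp add: strict_mono_less)
  also have "f (\<alpha> + 1) = f \<alpha> + 1" using f by (simp add: lift_def)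
  finally have lt: "f (\<alpha> + s) - f \<alpha> < 1" by simp
  have "ang (h x) (h w) = ang (ee (f \<alpha>)) (ee (f (\<alpha> + s)))" using xa ws hf by simp
  also have "\<dots> = f (\<alpha> + s) - f \<alpha>" by (rule ang_ee) (use le lt in auto)
  finally show ?thesis unfolding \<alpha>_def s_def .
qed

lemma iso_read:
  assumes wf: "rbcd_wf m D" and wf': "rbcd_wf m D'" and iso: "rbcd_iso D D'"
  shows "readc D = readc D'"
proof -
  obtain C r where D: "D = (C, r)" by (cases D)
  obtain C' r' where D': "D' = (C', r')" by (cases D')
  obtain h where h: "orient_pres_circle_homeo h" "C' = (\<lambda>(c, k). (h ` c, k)) ` C" "r' = map_option h r"
    using iso unfolding D D' rbcd_iso_def by auto
  note w = wf_props[OF wf[unfolded D]]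
  note wp = wf_pts[OF wf[unfolded D]]
  show ?thesis
  proof (cases r)
    case None
    then show ?thesis using h(3) unfolding D D' readc_def by simp
  next
    case (Some x)
    have r': "r' = Some (h x)" using h(3) Some by simp
    have xP: "x \<in> pts C" using w(6)[OF Some] unfolding pts_def .
    have xc: "x \<in> unit_circle" using xP wp(3) by blast
    obtain f where f: "lift f" "\<And>t. h (ee t) = ee (f t)" using orient_lift(1)[OF h(1)] by blast
    have injh: "inj_on h (pts C)" using orient_lift(2)[OF h(1)] wp(3) by (rule inj_on_subset)
    have P': "pts C' = h ` pts C" unfolding h(2) pts_def by (rule Union_fst_img)
    have sm: "strict_mono f" using f(1) by (simp add: lift_def)
    have tr: "rnk (ang (h x)) (pts C') (h z) = rnk (ang x) (pts C) z" if z: "z \<in> pts C" for z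
    proof (rule rnk_transfer[OF injh P' z])
      fix w assume wP: "w \<in> pts C"
      have wc: "w \<in> unit_circle" and zc: "z \<in> unit_circle" using wP z wp(3) by auto
      show "ang (h x) (h w) < ang (h x) (h z) \<longleftrightarrow> ang x w < ang x z"
        unfolding ang_lift[OF f xc wc] ang_lift[OF f xc zc]
        using strict_mono_less[OF sm] by simp
    qed
    have "readc D' = (\<lambda>(c, k). (rnk (ang (h x)) (pts C') ` c, k)) ` (\<lambda>(c, k). (h ` c, k)) ` C"
      unfolding D' readc_def r' h(2) by simp
    also have "\<dots> = (\<lambda>(c, k). (rnk (ang x) (pts C) ` c, k)) ` C"
      unfolding image_image
    proof (rule image_cong[OF refl])
      fix a assume a: "a \<in> C"
      obtain c k where ck: "a = (c, k)" by (cases a)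
      have sub: "c \<subseteq> pts C" using a unfolding ck pts_def by (rule sub_pts)
      have "rnk (ang (h x)) (pts C') ` h ` c = rnk (ang x) (pts C) ` c"
        unfolding image_image using tr sub by (intro image_cong) auto
      then show "(\<lambda>(c, k). (rnk (ang (h x)) (pts C') ` c, k)) ((\<lambda>(c, k). (h ` c, k)) a) =
          (\<lambda>(c, k). (rnk (ang x) (pts C) ` c, k)) a" unfolding ck by simp
    qed
    also have "\<dots> = readc D" unfolding D readc_def Some by simp
    finally show ?thesis by simp
  qed
qed

lemma knots:
  assumes fin: "finite P" and Pc: "P \<subseteq> unit_circle" and x: "x \<in> P"
  assumes n_def: "n = card P"
  assumes a_def: "a = (\<lambda>j. if j < n then ang x (the_inv_into P (rnk (ang x) P) (Suc j)) else 1)"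
  shows "incr a n" "a 0 = 0" "a n = 1" "\<And>j. j < n \<Longrightarrow> 0 \<le> a j \<and> a j < 1"
    "\<And>z. z \<in> P \<Longrightarrow> rnk (ang x) P z - 1 < n \<and> a (rnk (ang x) P z - 1) = ang x z"
    "\<And>j. j < n \<Longrightarrow> the_inv_into P (rnk (ang x) P) (Suc j) \<in> P \<and>
        rnk (ang x) P (the_inv_into P (rnk (ang x) P) (Suc j)) = Suc j \<and>
        a j = ang x (the_inv_into P (rnk (ang x) P) (Suc j))"
proof -
  define R where "R = rnk (ang x) P"
  define q where "q j = the_inv_into P R (Suc j)" for j
  have xc: "x \<in> unit_circle" using x Pc by blast
  have injg: "inj_on (ang x) P" by (rule ang_inj_on[OF xc Pc])
  have injR: "inj_on R P" unfolding R_def by (rule rnk_inj[OF fin injg])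
  have imR: "R ` P = {1..n}" unfolding R_def n_def by (rule rnk_image[OF fin injg])
  have n: "n \<ge> 1" using x fin unfolding n_def by (metis One_nat_def Suc_leI card_gt_0_iff empty_iff)
  have q: "q j \<in> P \<and> R (q j) = Suc j" if "j < n" for j
  proof -
    have "Suc j \<in> R ` P" using imR that by simp
    then show ?thesis unfolding q_def
      using the_inv_into_into[OF injR _ order_refl] f_the_inv_into_f[OF injR] by blast
  qed
  have aq: "a j = ang x (q j)" if "j < n" for j unfolding a_def q_def R_def using that by simp
  have Rx: "R x = 1"
  proof -
    have e: "{w \<in> P. ang x w < ang x x} = {}" using ang_props(1)[OF xc] Pc ang_self[OF xc] by force
    show ?thesis unfolding R_def rnk_def e by simp
  qed
  have q0: "q 0 = x" unfolding q_def using the_inv_into_f_f[OF injR x] Rx by simp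
  show a0: "a 0 = 0" using aq[of 0] n q0 ang_self[OF xc] by simp
  show an: "a n = 1" unfolding a_def by simp
  show rng: "\<And>j. j < n \<Longrightarrow> 0 \<le> a j \<and> a j < 1"
  proof -
    fix j assume j: "j < n"
    have "q j \<in> unit_circle" using q[OF j] Pc by blast
    then show "0 \<le> a j \<and> a j < 1" using aq[OF j] ang_props[OF xc] by simp
  qed
  show "incr a n" unfolding incr_def
  proof (intro allI impI)
    fix i assume i: "i < n"
    show "a i < a (Suc i)"
    proof (cases "Suc i < n")
      case True
      have "R (q i) < R (q (Suc i))" using q[OF i] q[OF True] by simp
      then have "ang x (q i) < ang x (q (Suc i))"
        using rnk_less_iff[OF fin injg, of "q i" "q (Suc i)"] q[OF i] q[OF True] unfolding R_def by blast
      then show ?thesis using aq[OF i] aq[OF True] by simp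
    next
      case False
      then have "Suc i = n" using i by simp
      then show ?thesis using rng[OF i] an by simp
    qed
  qed
  show "\<And>z. z \<in> P \<Longrightarrow> rnk (ang x) P z - 1 < n \<and> a (rnk (ang x) P z - 1) = ang x z"
  proof -
    fix z assume z: "z \<in> P"
    have Rz: "R z \<in> {1..n}" using imR z by blast
    then have lt: "R z - 1 < n" by auto
    have "q (R z - 1) = the_inv_into P R (R z)" unfolding q_def using Rz by simp
    also have "\<dots> = z" by (rule the_inv_into_f_f[OF injR z])
    finally show "rnk (ang x) P z - 1 < n \<and> a (rnk (ang x) P z - 1) = ang x z"
      using aq[OF lt] lt unfolding R_def by simp
  qed
  show "\<And>j. j < n \<Longrightarrow> the_inv_into P (rnk (ang x) P) (Suc j) \<in> P \<and>
        rnk (ang x) P (the_inv_into P (rnk (ang x) P) (Suc j)) = Suc j \<and>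
        a j = ang x (the_inv_into P (rnk (ang x) P) (Suc j))"
    using q aq unfolding q_def R_def by blast
qed


lemma lift_id: "lift (\<lambda>t. t)"
  unfolding lift_def strict_mono_def by (auto intro: continuous_intros)

lemma construct:
  assumes fin: "finite P" and Pc: "P \<subseteq> unit_circle" and x: "x \<in> P"
    and fin': "finite P'" and Pc': "P' \<subseteq> unit_circle" and x': "x' \<in> P'"
    and cd: "card P' = card P"
  shows "\<exists>h. orient_pres_circle_homeo h \<and>
    (\<forall>z\<in>P. h z \<in> P' \<and> rnk (ang x') P' (h z) = rnk (ang x) P z)"
proof -
  define n where "n = card P"
  define a where "a = (\<lambda>j. if j < n then ang x (the_inv_into P (rnk (ang x) P) (Suc j)) else 1)"
  define b where "b = (\<lambda>j. if j < n then ang x' (the_inv_into P' (rnk (ang x') P') (Suc j)) else 1)"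
  have n': "n = card P'" using cd n_def by simp
  note ka = knots[OF fin Pc x n_def a_def]
  note kb = knots[OF fin' Pc' x' n' b_def[unfolded n_def, folded n_def]]
  have a0: "a 0 = 0" unfolding a_def n_def using knots(2)[OF fin Pc x] by simp
  have b0: "b 0 = 0" unfolding b_def n_def using knots(2)[OF fin' Pc' x'] cd by simp
  have an: "a n = 1" "b n = 1" unfolding a_def b_def by simp_all
  define F where "F = PL a b n"
  have F0: "F 0 = 0" using PL_at[OF ka(1), of 0 b] a0 unfolding F_def by simp
  have F1: "F 1 = 1" using PL_at[OF ka(1), of n b] an b0 unfolding F_def by simp
  have Fs: "F s < F t" if "0 \<le> s" "s < t" "t \<le> 1" for s t
    unfolding F_def by (rule PL_strict[OF ka(1) kb(1)]) (use that a0 an in auto)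
  have le: "lift (ext01 F)" by (rule ext01_lift[OF _ Fs F0 F1]) (simp add: F_def PL_cont)
  define \<alpha> where "\<alpha> = Arg2pi x / (2 * pi)"
  define \<beta> where "\<beta> = Arg2pi x' / (2 * pi)"
  define f where "f = (\<lambda>t. \<beta> + ext01 F (t - \<alpha>))"
  have lf: "lift f" unfolding f_def by (rule lift_conj[OF le])
  have xa: "x = ee \<alpha>" unfolding \<alpha>_def using circle_ee x Pc by auto
  have xb: "x' = ee \<beta>" unfolding \<beta>_def using circle_ee x' Pc' by auto
  have main: "hh f z \<in> P' \<and> rnk (ang x') P' (hh f z) = rnk (ang x) P z" if z: "z \<in> P" for z
  proof -
    define j where "j = rnk (ang x) P z - 1"
    have j: "j < n" "a j = ang x z" using ka(5)[OF z] unfolding j_def by auto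
    have aj: "0 \<le> a j" "a j < 1" using ka(4)[OF j(1)] by auto
    have zc: "z \<in> unit_circle" "x \<in> unit_circle" using z x Pc by auto
    have "z = x * ee (a j)" using ang_props(3)[OF zc(2) zc(1)] j(2) by simp
    then have ze: "z = ee (\<alpha> + a j)" using xa ee_add by simp
    have fl: "\<lfloor>a j\<rfloor> = 0" using aj by (simp add: floor_eq_iff)
    have "ext01 F (a j) = F (a j)" unfolding ext01_def fl by simp
    also have "\<dots> = b j - b 0" unfolding F_def by (rule PL_at[OF ka(1)]) (use j in simp)
    also have "\<dots> = b j" using b0 by simp
    finally have e1: "ext01 F (a j) = b j" .
    have "hh f z = ee (f (\<alpha> + a j))" using ze hh_ee[OF lf] by simp
    also have "\<dots> = ee (\<beta> + b j)" unfolding f_def using e1 by simp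
    also have "\<dots> = x' * ee (b j)" using xb ee_add by simp
    finally have hz: "hh f z = x' * ee (b j)" .
    define w where "w = the_inv_into P' (rnk (ang x') P') (Suc j)"
    have w: "w \<in> P'" "rnk (ang x') P' w = Suc j" "b j = ang x' w" using kb(6)[OF j(1)] unfolding w_def by auto
    have wc: "x' \<in> unit_circle" "w \<in> unit_circle" using w(1) x' Pc' by auto
    have "w = x' * ee (b j)" using ang_props(3)[OF wc] unfolding w(3)[symmetric] .
    then have "x' * ee (b j) = w" by (rule sym)
    then have "hh f z = w" using hz by simp
    moreover have "Suc j = rnk (ang x) P z" unfolding j_def using rnk_range[OF fin z, of "ang x"] by simp
    ultimately show ?thesis using w by simp
  qed
  show ?thesis using hh_orient[OF lf] main by blast
qed

lemma read_iso:
  assumes wf: "rbcd_wf m D" and wf': "rbcd_wf m D'" and rd: "readc D = readc D'"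
  shows "rbcd_iso D D'"
proof -
  obtain C r where D: "D = (C, r)" by (cases D)
  obtain C' r' where D': "D' = (C', r')" by (cases D')
  note w = wf_props[OF wf[unfolded D]]
  note wp = wf_pts[OF wf[unfolded D]]
  note w' = wf_props[OF wf'[unfolded D']]
  note wp' = wf_pts[OF wf'[unfolded D']]
  show ?thesis
  proof (cases r)
    case None
    then have C: "C = {}" using w(5) by simp
    show ?thesis
    proof (cases r')
      case None
      then have "C' = {}" using w'(5) by simp
      then show ?thesis unfolding D D' rbcd_iso_def using C None \<open>r = None\<close> hh_orient[OF lift_id] by auto
    next
      case (Some x')
      have "C' \<noteq> {}" using w'(6)[OF Some] by auto
      then have "readc D' \<noteq> {}" unfolding D' readc_def Some by simp
      moreover have "readc D = {}" unfolding D readc_def None by simp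
      ultimately show ?thesis using rd by simp
    qed
  next
    case (Some x)
    note rS = Some
    show ?thesis
    proof (cases r')
      case None
      have "C \<noteq> {}" using w(6)[OF rS] by auto
      then have "readc D \<noteq> {}" unfolding D readc_def Some by simp
      moreover have "readc D' = {}" unfolding D' readc_def None by simp
      ultimately show ?thesis using rd by simp
    next
      case (Some x')
      note rS' = Some
      define P where "P = pts C"
      define P' where "P' = pts C'"
      have xP: "x \<in> P" using w(6)[OF rS] unfolding P_def pts_def .
      have xP': "x' \<in> P'" using w'(6)[OF rS'] unfolding P'_def pts_def .
      define R where "R = rnk (ang x) P"
      define R' where "R' = rnk (ang x') P'"
      obtain h where h: "orient_pres_circle_homeo h" "\<And>z. z \<in> P \<Longrightarrow> h z \<in> P' \<and> R' (h z) = R z"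
        using construct[OF wp(1)[folded P_def] wp(3)[folded P_def] xP wp'(1)[folded P'_def] wp'(3)[folded P'_def] xP'] wp(2)[folded P_def] wp'(2)[folded P'_def]
        unfolding R_def R'_def by auto
      have xc': "x' \<in> unit_circle" using xP' wp'(3) P'_def by blast
      have injR': "inj_on R' P'" unfolding R'_def P'_def by (rule rnk_inj[OF wp'(1) ang_inj_on[OF xc' wp'(3)]])
      define Phi' where "Phi' = (\<lambda>(c::complex set, k::nat). (R' ` c, k))"
      define Phih where "Phih = (\<lambda>(c::complex set, k::nat). (h ` c, k))"
      define S where "S = {(c, k::nat). c \<subseteq> P'}"
      have injPhi: "inj_on Phi' S"
      proof
        fix u v assume u: "u \<in> S" and v: "v \<in> S" and e: "Phi' u = Phi' v"
        obtain c k where ck: "u = (c, k)" by (cases u)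
        obtain c2 k2 where ck2: "v = (c2, k2)" by (cases v)
        have "R' ` c = R' ` c2" "k = k2" using e unfolding ck ck2 Phi'_def by auto
        moreover have "c \<subseteq> P'" "c2 \<subseteq> P'" using u v unfolding ck ck2 S_def by auto
        ultimately show "u = v" unfolding ck ck2 using inj_on_image_eq_iff[OF injR'] by blast
      qed
      have sub1: "Phih ` C \<subseteq> S"
      proof
        fix u assume "u \<in> Phih ` C"
        then obtain c k where ck: "(c, k) \<in> C" "u = (h ` c, k)" unfolding Phih_def by auto
        have "c \<subseteq> P" using ck(1) unfolding P_def pts_def by (rule sub_pts)
        then show "u \<in> S" using h(2) ck(2) unfolding S_def by auto
      qed
      have sub2: "C' \<subseteq> S"
      proof
        fix u assume u: "u \<in> C'"
        obtain c k where ck: "u = (c, k)" by (cases u)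
        have "c \<subseteq> P'" using u unfolding ck P'_def pts_def by (rule sub_pts)
        then show "u \<in> S" unfolding S_def ck by simp
      qed
      have "readc D = (\<lambda>(c, k). (R ` c, k)) ` C" unfolding D readc_def rS R_def P_def by simp
      also have "\<dots> = Phi' ` Phih ` C" unfolding image_image
      proof (rule image_cong[OF refl])
        fix u assume u: "u \<in> C"
        obtain c k where ck: "u = (c, k)" by (cases u)
        have sub: "c \<subseteq> P" using u unfolding ck P_def pts_def by (rule sub_pts)
        have "R ` c = R' ` h ` c" unfolding image_image using h(2) sub by (intro image_cong) auto
        then show "(\<lambda>(c, k). (R ` c, k)) u = Phi' (Phih u)" unfolding ck Phi'_def Phih_def by simp
      qed
      finally have e1: "readc D = Phi' ` Phih ` C" .
      have e2: "readc D' = Phi' ` C'" unfolding D' readc_def rS' R'_def P'_def Phi'_def by simp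
      have CC: "C' = Phih ` C" using inj_on_image_eq_iff[OF injPhi sub1 sub2] rd e1 e2 by simp
      have "h x \<in> P'" "R' (h x) = R x" using h(2)[OF xP] by auto
      moreover have "R x = 1"
      proof -
        have xc: "x \<in> unit_circle" using xP wp(3) P_def by blast
        have e: "{w \<in> P. ang x w < ang x x} = {}" using ang_props(1)[OF xc] wp(3) ang_self[OF xc] P_def by force
        show ?thesis unfolding R_def rnk_def e by simp
      qed
      moreover have "R' x' = 1"
      proof -
        have e: "{w \<in> P'. ang x' w < ang x' x'} = {}" using ang_props(1)[OF xc'] wp'(3) ang_self[OF xc'] P'_def by force
        show ?thesis unfolding R'_def rnk_def e by simp
      qed
      ultimately have "h x = x'" using injR' xP' unfolding inj_on_def by metis
      then show ?thesis unfolding D D' rbcd_iso_def using h(1) CC rS rS' unfolding Phih_def by auto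
    qed
  qed
qed

lemma chord_part: "\<exists>f. bij_betw f (rooted_bicolored_chord_diagrams m) (bicolored_ordered_matchings m)"
  unfolding rooted_bicolored_chord_diagrams_def
proof (rule class_bij[where rd = readc])
  show "\<And>X. rbcd_wf m X \<Longrightarrow> readc X \<in> bicolored_ordered_matchings m" by (rule readc_in)
  show "\<And>X Y. rbcd_wf m X \<Longrightarrow> rbcd_wf m Y \<Longrightarrow> rbcd_iso X Y \<longleftrightarrow> readc X = readc Y"
    using iso_read read_iso by blast
  show "\<And>M. M \<in> bicolored_ordered_matchings m \<Longrightarrow> \<exists>X. rbcd_wf m X \<and> readc X = M"
    by (rule readc_surj)
qed


definition orb :: "(nat \<Rightarrow> nat) \<Rightarrow> nat \<Rightarrow> nat \<Rightarrow> nat" where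
  "orb \<tau> r0 n = (\<tau> ^^ n) r0"

lemma orb_Suc: "orb \<tau> r0 (Suc n) = \<tau> (orb \<tau> r0 n)"
  by (simp add: orb_def)

lemma orb_0: "orb \<tau> r0 0 = r0" by (simp add: orb_def)

lemma orb_in: assumes "\<And>b. b \<in> B \<Longrightarrow> \<tau> b \<in> B" "r0 \<in> B" shows "orb \<tau> r0 n \<in> B"
  by (induction n) (use assms in \<open>auto simp: orb_0 orb_Suc\<close>)

lemma orb_cancel:
  assumes maps: "\<And>b. b \<in> B \<Longrightarrow> \<tau> b \<in> B" and inj: "inj_on \<tau> B" and r0: "r0 \<in> B"
  shows "orb \<tau> r0 (i + d) = orb \<tau> r0 (j + d) \<Longrightarrow> orb \<tau> r0 i = orb \<tau> r0 j"
proof (induction d)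
  case 0 then show ?case by simp
next
  case (Suc d)
  have "\<tau> (orb \<tau> r0 (i + d)) = \<tau> (orb \<tau> r0 (j + d))" using Suc.prems by (simp add: orb_Suc)
  then have "orb \<tau> r0 (i + d) = orb \<tau> r0 (j + d)"
    using inj orb_in[of B \<tau>, OF maps r0] unfolding inj_on_def by blast
  then show ?case by (rule Suc.IH)
qed

lemma orb_period:
  assumes "orb \<tau> r0 p = r0"
  shows "orb \<tau> r0 (n + p) = orb \<tau> r0 n"
proof (induction n)
  case 0 then show ?case using assms by (simp add: orb_0)
next
  case (Suc n) then show ?case by (simp add: orb_Suc)
qed

lemma orb_period_mult:
  assumes "orb \<tau> r0 p = r0"
  shows "orb \<tau> r0 (k + p * q) = orb \<tau> r0 k"
proof (induction q)
  case 0 then show ?case by simp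
next
  case (Suc q)
  have "orb \<tau> r0 (k + p * Suc q) = orb \<tau> r0 ((k + p * q) + p)" by (simp add: algebra_simps)
  also have "\<dots> = orb \<tau> r0 (k + p * q)" by (rule orb_period[OF assms])
  finally show ?case using Suc by simp
qed

lemma orb_mod:
  assumes "orb \<tau> r0 p = r0"
  shows "orb \<tau> r0 (n mod p) = orb \<tau> r0 n"
proof -
  have "n = n mod p + p * (n div p)" by simp
  then have "orb \<tau> r0 n = orb \<tau> r0 (n mod p + p * (n div p))" by simp
  also have "\<dots> = orb \<tau> r0 (n mod p)" by (rule orb_period_mult[OF assms])
  finally show ?thesis by simp
qed

lemma orb_props:
  assumes fin: "finite B" and maps: "\<And>b. b \<in> B \<Longrightarrow> \<tau> b \<in> B" and inj: "inj_on \<tau> B"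
    and r0: "r0 \<in> B" and cover: "\<And>b. b \<in> B \<Longrightarrow> \<exists>n. orb \<tau> r0 n = b"
  shows "bij_betw (orb \<tau> r0) {0..<card B} B" "orb \<tau> r0 (card B) = r0"
proof -
  define N where "N = card B"
  have N: "N > 0" using fin r0 unfolding N_def by (simp add: card_gt_0_iff) blast
  have injN: "inj_on (orb \<tau> r0) {0..<N}"
  proof (rule ccontr)
    assume "\<not> inj_on (orb \<tau> r0) {0..<N}"
    then obtain i j where ij: "i < j" "j < N" "orb \<tau> r0 i = orb \<tau> r0 j"
      unfolding inj_on_def by (metis atLeastLessThan_iff linorder_neqE_nat)
    define p where "p = j - i"
    have p: "0 < p" "p < N" using ij unfolding p_def by auto
    have "orb \<tau> r0 (0 + i) = orb \<tau> r0 (p + i)" using ij unfolding p_def by simp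
    then have per: "orb \<tau> r0 p = r0" using orb_cancel[of B \<tau> r0, OF maps inj r0, of 0 i p] by (simp add: orb_0)
    have "B \<subseteq> orb \<tau> r0 ` {0..<p}"
    proof
      fix b assume "b \<in> B"
      then obtain n where "orb \<tau> r0 n = b" using cover by blast
      then have "orb \<tau> r0 (n mod p) = b" using orb_mod[OF per] by simp
      moreover have "n mod p < p" using p by simp
      ultimately show "b \<in> orb \<tau> r0 ` {0..<p}" by force
    qed
    then have "card B \<le> card (orb \<tau> r0 ` {0..<p})" by (rule card_mono[rotated]) simp
    also have "\<dots> \<le> p" using card_image_le[of "{0..<p}" "orb \<tau> r0"] by simp
    finally show False using p unfolding N_def by simp
  qed
  have sub: "orb \<tau> r0 ` {0..<N} \<subseteq> B" using orb_in[of B \<tau>, OF maps r0] by blast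
  have "card (orb \<tau> r0 ` {0..<N}) = N" using card_image[OF injN] by simp
  then have im: "orb \<tau> r0 ` {0..<N} = B" using sub fin unfolding N_def by (intro card_subset_eq) auto
  show "bij_betw (orb \<tau> r0) {0..<card B} B" using injN im unfolding bij_betw_def N_def by blast
  show "orb \<tau> r0 (card B) = r0"
  proof -
    have "orb \<tau> r0 N \<in> B" by (rule orb_in[of B \<tau>, OF maps r0])
    then obtain k where k: "k < N" "orb \<tau> r0 N = orb \<tau> r0 k" using im by (metis atLeastLessThan_iff imageE)
    show ?thesis
    proof (cases "k = 0")
      case True then show ?thesis using k unfolding N_def by (simp add: orb_0)
    next
      case False
      have eq: "orb \<tau> r0 ((N - k) + k) = orb \<tau> r0 (0 + k)" using k by simp
      have "orb \<tau> r0 (N - k) = orb \<tau> r0 0" by (rule orb_cancel[of B \<tau> r0 "N - k" k 0, OF maps inj r0 eq])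
      moreover have "N - k \<in> {0..<N}" "0 \<in> {0..<N}" using False k N by auto
      ultimately have "N - k = 0" using injN unfolding inj_on_def by blast
      then show ?thesis using False k by simp
    qed
  qed
qed

definition opos :: "(nat \<Rightarrow> nat) \<Rightarrow> nat \<Rightarrow> nat set \<Rightarrow> nat \<Rightarrow> nat" where
  "opos \<tau> r0 B = the_inv_into {0..<card B} (orb \<tau> r0)"

lemma opos_props:
  assumes fin: "finite B" and maps: "\<And>b. b \<in> B \<Longrightarrow> \<tau> b \<in> B" and inj: "inj_on \<tau> B"
    and r0: "r0 \<in> B" and cover: "\<And>b. b \<in> B \<Longrightarrow> \<exists>n. orb \<tau> r0 n = b"
  shows "\<And>b. b \<in> B \<Longrightarrow> opos \<tau> r0 B b < card B \<and> orb \<tau> r0 (opos \<tau> r0 B b) = b"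
    "\<And>n. n < card B \<Longrightarrow> opos \<tau> r0 B (orb \<tau> r0 n) = n"
    "\<And>b. b \<in> B \<Longrightarrow> opos \<tau> r0 B (\<tau> b) = Suc (opos \<tau> r0 B b) mod card B"
    "opos \<tau> r0 B r0 = 0"
    "bij_betw (opos \<tau> r0 B) B {0..<card B}"
proof -
  note op = orb_props[OF assms]
  have injo: "inj_on (orb \<tau> r0) {0..<card B}" using op(1) unfolding bij_betw_def by blast
  have imo: "orb \<tau> r0 ` {0..<card B} = B" using op(1) unfolding bij_betw_def by blast
  show bb: "bij_betw (opos \<tau> r0 B) B {0..<card B}" unfolding opos_def using bij_betw_the_inv_into[OF op(1)] .
  show A: "\<And>b. b \<in> B \<Longrightarrow> opos \<tau> r0 B b < card B \<and> orb \<tau> r0 (opos \<tau> r0 B b) = b"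
  proof -
    fix b assume b: "b \<in> B"
    have "opos \<tau> r0 B b \<in> {0..<card B}" using bb b unfolding bij_betw_def by blast
    moreover have "orb \<tau> r0 (opos \<tau> r0 B b) = b"
      unfolding opos_def by (rule f_the_inv_into_f[OF injo]) (use imo b in simp)
    ultimately show "opos \<tau> r0 B b < card B \<and> orb \<tau> r0 (opos \<tau> r0 B b) = b" by simp
  qed
  show B: "\<And>n. n < card B \<Longrightarrow> opos \<tau> r0 B (orb \<tau> r0 n) = n"
    unfolding opos_def by (rule the_inv_into_f_f[OF injo]) simp
  show "\<And>b. b \<in> B \<Longrightarrow> opos \<tau> r0 B (\<tau> b) = Suc (opos \<tau> r0 B b) mod card B"
  proof -
    fix b assume b: "b \<in> B"
    have N: "card B > 0" using fin r0 by (simp add: card_gt_0_iff) blast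
    have "\<tau> b = orb \<tau> r0 (Suc (opos \<tau> r0 B b))" using A[OF b] by (simp add: orb_Suc)
    also have "\<dots> = orb \<tau> r0 (Suc (opos \<tau> r0 B b) mod card B)" using orb_mod[OF op(2)] by simp
    finally show "opos \<tau> r0 B (\<tau> b) = Suc (opos \<tau> r0 B b) mod card B" using B N by simp
  qed
  show "opos \<tau> r0 B r0 = 0"
  proof -
    have N: "card B > 0" using fin r0 by (simp add: card_gt_0_iff) blast
    show ?thesis using B[of 0] N by (simp add: orb_0)
  qed
qed


lemma mwf_props:
  assumes "rmqt_wf m (B, \<sigma>, \<alpha>, r, S)"
  shows "finite B" "\<sigma> permutes B" "\<alpha> permutes B" "\<And>b. b \<in> B \<Longrightarrow> \<alpha> b \<noteq> b \<and> \<alpha> (\<alpha> b) = b"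
    "card B = 2 * m" "r = None \<Longrightarrow> B = {}" "\<And>r0. r = Some r0 \<Longrightarrow> r0 \<in> B"
    "S \<subseteq> map_edges B \<alpha>" "\<And>b b'. b \<in> B \<Longrightarrow> b' \<in> B \<Longrightarrow> \<exists>n. (tour \<sigma> \<alpha> S ^^ n) b = b'"
proof -
  have P: "is_map B \<sigma> \<alpha> \<and> card B = 2 * m \<and> (case r of None \<Rightarrow> B = {} | Some b \<Rightarrow> b \<in> B) \<and>
     is_quasi_tree B \<sigma> \<alpha> S" using assms unfolding rmqt_wf_def prod.case .
  have M: "is_map B \<sigma> \<alpha>" using P by (elim conjE)
  note M1 = M[unfolded is_map_def]
  show "finite B" using M1 by (elim conjE)
  show "\<sigma> permutes B" using M1 by (elim conjE)
  show "\<alpha> permutes B" using M1 by (elim conjE)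
  have M3: "\<forall>b \<in> B. \<alpha> b \<noteq> b \<and> \<alpha> (\<alpha> b) = b" using M1 by (elim conjE)
  show "\<And>b. b \<in> B \<Longrightarrow> \<alpha> b \<noteq> b \<and> \<alpha> (\<alpha> b) = b" using M3 by (elim ballE) auto
  show "card B = 2 * m" using P by (elim conjE)
  have R: "case r of None \<Rightarrow> B = {} | Some b \<Rightarrow> b \<in> B" using P by (elim conjE)
  show "r = None \<Longrightarrow> B = {}" using R by simp
  show "\<And>r0. r = Some r0 \<Longrightarrow> r0 \<in> B" using R by simp
  have Q: "is_quasi_tree B \<sigma> \<alpha> S" using P by (elim conjE)
  then have Q2: "S \<subseteq> map_edges B \<alpha> \<and> (\<forall>b \<in> B. \<forall>b' \<in> B. \<exists>n. (tour \<sigma> \<alpha> S ^^ n) b = b')"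
    unfolding is_quasi_tree_def .
  show "S \<subseteq> map_edges B \<alpha>" using Q2 by (elim conjE)
  have Q3: "\<forall>b \<in> B. \<forall>b' \<in> B. \<exists>n. (tour \<sigma> \<alpha> S ^^ n) b = b'" using Q2 by (elim conjE)
  show "\<And>b b'. b \<in> B \<Longrightarrow> b' \<in> B \<Longrightarrow> \<exists>n. (tour \<sigma> \<alpha> S ^^ n) b = b'"
    using Q3 by blast
qed

lemma edge_swap: "{\<alpha> b, \<alpha> (\<alpha> b)} = {b, \<alpha> b}" if "\<alpha> (\<alpha> b) = b" for \<alpha> :: "nat \<Rightarrow> nat" and b
  using that by auto

lemma tour_in:
  assumes "\<sigma> permutes B" "\<alpha> permutes B" "b \<in> B"
  shows "tour \<sigma> \<alpha> S b \<in> B"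
  unfolding tour_def using assms permutes_in_image by (simp add: permutes_in_image)

lemma tour_inj:
  assumes s: "\<sigma> permutes B" and a: "\<alpha> permutes B" and inv: "\<And>b. b \<in> B \<Longrightarrow> \<alpha> (\<alpha> b) = b"
  shows "inj_on (tour \<sigma> \<alpha> S) B"
proof
  fix x y assume x: "x \<in> B" and y: "y \<in> B" and e: "tour \<sigma> \<alpha> S x = tour \<sigma> \<alpha> S y"
  define g where "g b = (if {b, \<alpha> b} \<in> S then \<alpha> b else b)" for b
  have "tour \<sigma> \<alpha> S b = \<sigma> (g b)" for b unfolding tour_def g_def by simp
  then have "\<sigma> (g x) = \<sigma> (g y)" using e by simp
  then have gxy: "g x = g y" using permutes_inj[OF s] unfolding inj_def by blast
  show "x = y"
  proof (cases "{x, \<alpha> x} \<in> S"; cases "{y, \<alpha> y} \<in> S")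
    assume "{x, \<alpha> x} \<in> S" "{y, \<alpha> y} \<in> S"
    then have "\<alpha> x = \<alpha> y" using gxy unfolding g_def by simp
    then show "x = y" using permutes_inj[OF a] unfolding inj_def by blast
  next
    assume "{x, \<alpha> x} \<notin> S" "{y, \<alpha> y} \<notin> S"
    then show "x = y" using gxy unfolding g_def by simp
  next
    assume A: "{x, \<alpha> x} \<in> S" "{y, \<alpha> y} \<notin> S"
    then have "\<alpha> x = y" using gxy unfolding g_def by simp
    then have "{y, \<alpha> y} = {x, \<alpha> x}" using inv[OF x] by auto
    then show "x = y" using A by simp
  next
    assume A: "{x, \<alpha> x} \<notin> S" "{y, \<alpha> y} \<in> S"
    then have "x = \<alpha> y" using gxy unfolding g_def by simp
    then have "{x, \<alpha> x} = {y, \<alpha> y}" using inv[OF y] by auto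
    then show "x = y" using A by simp
  qed
qed

definition rk :: "(nat \<Rightarrow> nat) \<Rightarrow> nat \<Rightarrow> nat set \<Rightarrow> nat \<Rightarrow> nat" where
  "rk \<tau> r0 B c = Suc (opos \<tau> r0 B c)"

definition mcol :: "nat set set \<Rightarrow> nat set \<Rightarrow> nat" where
  "mcol S e = (if e \<in> S then 2 else 1)"

definition readm :: "map_qt \<Rightarrow> (nat set \<times> nat) set" where
  "readm X = (case X of (B, \<sigma>, \<alpha>, r, S) \<Rightarrow> (case r of None \<Rightarrow> {}
     | Some r0 \<Rightarrow> (\<lambda>b. (rk (tour \<sigma> \<alpha> S) r0 B ` {b, \<alpha> b}, mcol S {b, \<alpha> b})) ` B))"

lemma mwf_orb:
  assumes wf: "rmqt_wf m (B, \<sigma>, \<alpha>, Some r0, S)"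
  shows "\<And>b. b \<in> B \<Longrightarrow> opos (tour \<sigma> \<alpha> S) r0 B b < card B \<and> orb (tour \<sigma> \<alpha> S) r0 (opos (tour \<sigma> \<alpha> S) r0 B b) = b"
    "\<And>n. n < card B \<Longrightarrow> opos (tour \<sigma> \<alpha> S) r0 B (orb (tour \<sigma> \<alpha> S) r0 n) = n"
    "\<And>b. b \<in> B \<Longrightarrow> opos (tour \<sigma> \<alpha> S) r0 B (tour \<sigma> \<alpha> S b) = Suc (opos (tour \<sigma> \<alpha> S) r0 B b) mod card B"
    "opos (tour \<sigma> \<alpha> S) r0 B r0 = 0"
    "bij_betw (opos (tour \<sigma> \<alpha> S) r0 B) B {0..<card B}"
    "orb (tour \<sigma> \<alpha> S) r0 (card B) = r0"
    "\<And>n. orb (tour \<sigma> \<alpha> S) r0 n \<in> B"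
proof -
  note w = mwf_props[OF wf]
  have r0: "r0 \<in> B" using w(7) by simp
  have maps: "\<And>b. b \<in> B \<Longrightarrow> tour \<sigma> \<alpha> S b \<in> B" using tour_in[OF w(2) w(3)] by blast
  have inj: "inj_on (tour \<sigma> \<alpha> S) B" by (rule tour_inj[OF w(2) w(3)]) (use w(4) in blast)
  have cover: "\<And>b. b \<in> B \<Longrightarrow> \<exists>n. orb (tour \<sigma> \<alpha> S) r0 n = b"
    unfolding orb_def using w(9) r0 by blast
  note op = opos_props[of B "tour \<sigma> \<alpha> S" r0, OF w(1) maps inj r0 cover]
  show "\<And>b. b \<in> B \<Longrightarrow> opos (tour \<sigma> \<alpha> S) r0 B b < card B \<and> orb (tour \<sigma> \<alpha> S) r0 (opos (tour \<sigma> \<alpha> S) r0 B b) = b"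
    "\<And>n. n < card B \<Longrightarrow> opos (tour \<sigma> \<alpha> S) r0 B (orb (tour \<sigma> \<alpha> S) r0 n) = n"
    "\<And>b. b \<in> B \<Longrightarrow> opos (tour \<sigma> \<alpha> S) r0 B (tour \<sigma> \<alpha> S b) = Suc (opos (tour \<sigma> \<alpha> S) r0 B b) mod card B"
    "opos (tour \<sigma> \<alpha> S) r0 B r0 = 0"
    "bij_betw (opos (tour \<sigma> \<alpha> S) r0 B) B {0..<card B}" using op by blast+
  show "orb (tour \<sigma> \<alpha> S) r0 (card B) = r0"
    by (rule orb_props(2)[of B "tour \<sigma> \<alpha> S" r0, OF w(1) maps inj r0 cover])
  show "\<And>n. orb (tour \<sigma> \<alpha> S) r0 n \<in> B" by (rule orb_in[of B "tour \<sigma> \<alpha> S", OF maps r0])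
qed

lemma rk_bij:
  assumes wf: "rmqt_wf m (B, \<sigma>, \<alpha>, Some r0, S)"
  shows "inj_on (rk (tour \<sigma> \<alpha> S) r0 B) B" "rk (tour \<sigma> \<alpha> S) r0 B ` B = {1..2*m}"
proof -
  note o = mwf_orb[OF wf]
  have cB: "card B = 2 * m" using mwf_props(5)[OF wf] .
  have b: "bij_betw (opos (tour \<sigma> \<alpha> S) r0 B) B {0..<card B}" by (rule o(5))
  show "inj_on (rk (tour \<sigma> \<alpha> S) r0 B) B"
    using b unfolding bij_betw_def inj_on_def rk_def by simp
  have "rk (tour \<sigma> \<alpha> S) r0 B ` B = Suc ` opos (tour \<sigma> \<alpha> S) r0 B ` B"
    unfolding rk_def image_image ..
  also have "\<dots> = Suc ` {0..<card B}" using b unfolding bij_betw_def by simp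
  also have "\<dots> = {1..card B}" by (simp add: image_Suc_atLeastLessThan atLeastLessThanSuc_atLeastAtMost)
  finally show "rk (tour \<sigma> \<alpha> S) r0 B ` B = {1..2*m}" using cB by simp
qed

lemma pair_mem: "\<alpha> (\<alpha> b) = b \<Longrightarrow> c \<in> {b, \<alpha> b} \<Longrightarrow> {c, \<alpha> c} = {b, \<alpha> b}"
  by auto

lemma readm_in:
  assumes wf: "rmqt_wf m X"
  shows "readm X \<in> bicolored_ordered_matchings m"
proof -
  obtain B \<sigma> \<alpha> r S where X: "X = (B, \<sigma>, \<alpha>, r, S)" by (cases X) auto
  note w = mwf_props[OF wf[unfolded X]]
  show ?thesis
  proof (cases r)
    case None
    then have "B = {}" using w(6) by simp
    then have "m = 0" using w(5) by simp
    then show ?thesis using None unfolding X readm_def bicolored_ordered_matchings_def by simp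
  next
    case (Some r0)
    define R where "R = rk (tour \<sigma> \<alpha> S) r0 B"
    note rb = rk_bij[OF wf[unfolded X Some], folded R_def]
    have aB: "\<alpha> b \<in> B" if "b \<in> B" for b using that permutes_in_image[OF w(3)] by simp
    define G where "G b = (R ` {b, \<alpha> b}, mcol S {b, \<alpha> b})" for b
    have rd: "readm X = G ` B" unfolding X readm_def Some G_def R_def by simp
    show ?thesis unfolding rd bicolored_ordered_matchings_def
    proof (intro CollectI conjI)
      show "finite (G ` B)" using w(1) by simp
      show "\<forall>(p, k) \<in> G ` B. p \<subseteq> {1..2*m} \<and> card p = 2 \<and> k \<in> {1, 2}"
      proof
        fix u assume "u \<in> G ` B"
        then obtain b where b: "b \<in> B" "u = G b" by blast
        have sub: "{b, \<alpha> b} \<subseteq> B" using b aB by auto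
        have "R ` {b, \<alpha> b} \<subseteq> {1..2*m}" using rb(2) sub by blast
        moreover have "card (R ` {b, \<alpha> b}) = 2"
          using card_image[OF inj_on_subset[OF rb(1) sub]] w(4)[OF b(1)] by simp
        moreover have "mcol S {b, \<alpha> b} \<in> {1, 2}" unfolding mcol_def by simp
        ultimately show "case u of (p, k) \<Rightarrow> p \<subseteq> {1..2*m} \<and> card p = 2 \<and> k \<in> {1, 2}"
          unfolding b(2) G_def by simp
      qed
      show "\<forall>p \<in> G ` B. \<forall>q \<in> G ` B. p \<noteq> q \<longrightarrow> fst p \<inter> fst q = {}"
      proof (intro ballI impI)
        fix p q assume p: "p \<in> G ` B" and q: "q \<in> G ` B" and ne: "p \<noteq> q"
        obtain b1 where b1: "b1 \<in> B" "p = G b1" using p by blast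
        obtain b2 where b2: "b2 \<in> B" "q = G b2" using q by blast
        show "fst p \<inter> fst q = {}"
        proof (rule ccontr)
          assume "fst p \<inter> fst q \<noteq> {}"
          then obtain z where "z \<in> R ` {b1, \<alpha> b1}" "z \<in> R ` {b2, \<alpha> b2}" unfolding b1 b2 G_def by auto
          then obtain c1 c2 where c: "c1 \<in> {b1, \<alpha> b1}" "c2 \<in> {b2, \<alpha> b2}" "R c1 = R c2" by auto
          have "c1 \<in> B" "c2 \<in> B" using c b1 b2 aB by auto
          then have "c1 = c2" using rb(1) c(3) unfolding inj_on_def by blast
          then have "{b1, \<alpha> b1} = {b2, \<alpha> b2}"
            using pair_mem[of \<alpha> b1 c1] pair_mem[of \<alpha> b2 c2] c w(4)[OF b1(1)] w(4)[OF b2(1)] by metis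
          then have "G b1 = G b2" unfolding G_def by simp
          then show False using ne b1 b2 by simp
        qed
      qed
      have "\<Union>(fst ` G ` B) = R ` (\<Union>b\<in>B. {b, \<alpha> b})" unfolding G_def by (simp add: image_image image_UN)
      also have "(\<Union>b\<in>B. {b, \<alpha> b}) = B" using aB by blast
      finally show "\<Union>(fst ` G ` B) = {1..2*m}" using rb(2) by simp
    qed
  qed
qed


lemma mwf_orb_bij:
  assumes wf: "rmqt_wf m (B, \<sigma>, \<alpha>, Some r0, S)"
  shows "bij_betw (orb (tour \<sigma> \<alpha> S) r0) {0..<card B} B"
proof -
  note w = mwf_props[OF wf]
  have r0: "r0 \<in> B" using w(7) by simp
  have maps: "\<And>b. b \<in> B \<Longrightarrow> tour \<sigma> \<alpha> S b \<in> B" using tour_in[OF w(2) w(3)] by blast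
  have inj: "inj_on (tour \<sigma> \<alpha> S) B" by (rule tour_inj[OF w(2) w(3)]) (use w(4) in blast)
  have cover: "\<And>b. b \<in> B \<Longrightarrow> \<exists>n. orb (tour \<sigma> \<alpha> S) r0 n = b"
    unfolding orb_def using w(9) r0 by blast
  show ?thesis by (rule orb_props(1)[of B "tour \<sigma> \<alpha> S" r0, OF w(1) maps inj r0 cover])
qed

lemma edges_sub: "S \<subseteq> map_edges B \<alpha> \<Longrightarrow> \<alpha> permutes B \<Longrightarrow> e \<in> S \<Longrightarrow> e \<subseteq> B"
  unfolding map_edges_def using permutes_in_image by fastforce

lemma sigma_tour:
  assumes "\<alpha> (\<alpha> b) = b"
  shows "\<sigma> b = (if {b, \<alpha> b} \<in> S then tour \<sigma> \<alpha> S (\<alpha> b) else tour \<sigma> \<alpha> S b)"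
proof -
  have "{\<alpha> b, \<alpha> (\<alpha> b)} = {b, \<alpha> b}" using assms by auto
  then show ?thesis unfolding tour_def using assms by simp
qed

lemma iso_readm:
  assumes wf: "rmqt_wf m X" and wf': "rmqt_wf m X'" and iso: "rmqt_iso X X'"
  shows "readm X = readm X'"
proof -
  obtain B \<sigma> \<alpha> r S where X: "X = (B, \<sigma>, \<alpha>, r, S)" by (cases X) auto
  obtain B' \<sigma>' \<alpha>' r' S' where X': "X' = (B', \<sigma>', \<alpha>', r', S')" by (cases X') auto
  obtain \<phi> where phi: "bij_betw \<phi> B B'" "\<And>b. b \<in> B \<Longrightarrow> \<sigma>' (\<phi> b) = \<phi> (\<sigma> b) \<and> \<alpha>' (\<phi> b) = \<phi> (\<alpha> b)"
    "r' = map_option \<phi> r" "S' = (\<lambda>e. \<phi> ` e) ` S"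
    using iso unfolding X X' rmqt_iso_def prod.case by blast
  note w = mwf_props[OF wf[unfolded X]]
  note w' = mwf_props[OF wf'[unfolded X']]
  show ?thesis
  proof (cases r)
    case None
    then show ?thesis using phi(3) unfolding X X' readm_def by simp
  next
    case (Some r0)
    have r': "r' = Some (\<phi> r0)" using phi(3) Some by simp
    have r0: "r0 \<in> B" using w(7)[OF Some] .
    have injphi: "inj_on \<phi> B" and imphi: "\<phi> ` B = B'" using phi(1) unfolding bij_betw_def by auto
    have aB: "\<alpha> b \<in> B" if "b \<in> B" for b using that permutes_in_image[OF w(3)] by simp
    have sB: "\<sigma> b \<in> B" if "b \<in> B" for b using that permutes_in_image[OF w(2)] by simp
    have eS: "{\<phi> b, \<alpha>' (\<phi> b)} \<in> S' \<longleftrightarrow> {b, \<alpha> b} \<in> S" if b: "b \<in> B" for b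
    proof -
      have e1: "{\<phi> b, \<alpha>' (\<phi> b)} = \<phi> ` {b, \<alpha> b}" using phi(2)[OF b] by simp
      have subb: "{b, \<alpha> b} \<subseteq> B" using b aB by auto
      show ?thesis
      proof
        assume "{\<phi> b, \<alpha>' (\<phi> b)} \<in> S'"
        then obtain e where e: "e \<in> S" "\<phi> ` e = \<phi> ` {b, \<alpha> b}" unfolding phi(4) e1 by auto
        have "e \<subseteq> B" by (rule edges_sub[OF w(8) w(3) e(1)])
        then have "e = {b, \<alpha> b}" using inj_on_image_eq_iff[OF injphi _ subb] e(2) by blast
        then show "{b, \<alpha> b} \<in> S" using e(1) by simp
      next
        assume "{b, \<alpha> b} \<in> S"
        then show "{\<phi> b, \<alpha>' (\<phi> b)} \<in> S'" unfolding phi(4) e1 by blast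
      qed
    qed
    have tphi: "tour \<sigma>' \<alpha>' S' (\<phi> b) = \<phi> (tour \<sigma> \<alpha> S b)" if b: "b \<in> B" for b
    proof (cases "{b, \<alpha> b} \<in> S")
      case True
      then have "tour \<sigma>' \<alpha>' S' (\<phi> b) = \<sigma>' (\<alpha>' (\<phi> b))" using eS[OF b] unfolding tour_def by simp
      also have "\<dots> = \<phi> (\<sigma> (\<alpha> b))" using phi(2)[OF b] phi(2)[OF aB[OF b]] by simp
      finally show ?thesis using True unfolding tour_def by simp
    next
      case False
      then have "tour \<sigma>' \<alpha>' S' (\<phi> b) = \<sigma>' (\<phi> b)" using eS[OF b] unfolding tour_def by simp
      also have "\<dots> = \<phi> (\<sigma> b)" using phi(2)[OF b] by simp
      finally show ?thesis using False unfolding tour_def by simp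
    qed
    note o = mwf_orb[OF wf[unfolded X Some]]
    note o' = mwf_orb[OF wf'[unfolded X' r']]
    have ophi: "orb (tour \<sigma>' \<alpha>' S') (\<phi> r0) n = \<phi> (orb (tour \<sigma> \<alpha> S) r0 n)" for n
    proof (induction n)
      case 0 then show ?case by (simp add: orb_0)
    next
      case (Suc n) then show ?case using tphi[OF o(7)[of n]] by (simp add: orb_Suc)
    qed
    have cB: "card B' = card B" using w(5) w'(5) by simp
    have pphi: "opos (tour \<sigma>' \<alpha>' S') (\<phi> r0) B' (\<phi> b) = opos (tour \<sigma> \<alpha> S) r0 B b" if b: "b \<in> B" for b
    proof -
      define n where "n = opos (tour \<sigma> \<alpha> S) r0 B b"
      have n: "n < card B" "orb (tour \<sigma> \<alpha> S) r0 n = b" using o(1)[OF b] unfolding n_def by auto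
      have "\<phi> b = orb (tour \<sigma>' \<alpha>' S') (\<phi> r0) n" using ophi n(2) by simp
      then show ?thesis using o'(2)[of n] n(1) cB unfolding n_def by simp
    qed
    have G: "(rk (tour \<sigma>' \<alpha>' S') (\<phi> r0) B' ` {\<phi> b, \<alpha>' (\<phi> b)}, mcol S' {\<phi> b, \<alpha>' (\<phi> b)})
        = (rk (tour \<sigma> \<alpha> S) r0 B ` {b, \<alpha> b}, mcol S {b, \<alpha> b})" if b: "b \<in> B" for b
    proof -
      have "{\<phi> b, \<alpha>' (\<phi> b)} = {\<phi> b, \<phi> (\<alpha> b)}" using phi(2)[OF b] by simp
      moreover have "rk (tour \<sigma>' \<alpha>' S') (\<phi> r0) B' (\<phi> c) = rk (tour \<sigma> \<alpha> S) r0 B c" if "c \<in> B" for c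
        unfolding rk_def using pphi[OF that] by simp
      ultimately have "rk (tour \<sigma>' \<alpha>' S') (\<phi> r0) B' ` {\<phi> b, \<alpha>' (\<phi> b)} = rk (tour \<sigma> \<alpha> S) r0 B ` {b, \<alpha> b}"
        using b aB[OF b] by simp
      moreover have "mcol S' {\<phi> b, \<alpha>' (\<phi> b)} = mcol S {b, \<alpha> b}" unfolding mcol_def using eS[OF b] by simp
      ultimately show ?thesis by simp
    qed
    have "readm X' = (\<lambda>b'. (rk (tour \<sigma>' \<alpha>' S') (\<phi> r0) B' ` {b', \<alpha>' b'}, mcol S' {b', \<alpha>' b'})) ` \<phi> ` B"
      unfolding X' readm_def r' imphi by simp
    also have "\<dots> = (\<lambda>b. (rk (tour \<sigma> \<alpha> S) r0 B ` {b, \<alpha> b}, mcol S {b, \<alpha> b})) ` B"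
      unfolding image_image using G by (intro image_cong) auto
    also have "\<dots> = readm X" unfolding X readm_def Some by simp
    finally show ?thesis by simp
  qed
qed

lemma pair_alpha:
  assumes "\<alpha> (\<alpha> b') = b'" "\<alpha> b' \<noteq> b'" "{b', \<alpha> b'} = {u, v}" "u \<noteq> v"
  shows "\<alpha> u = v"
proof -
  have "u = b' \<or> u = \<alpha> b'" using assms(3) by blast
  then show ?thesis
  proof
    assume u: "u = b'"
    then have "v = \<alpha> b'" using assms(3,4) by (metis doubleton_eq_iff)
    then show ?thesis using u by simp
  next
    assume u: "u = \<alpha> b'"
    then have "v = b'" using assms(3,4) by (metis doubleton_eq_iff)
    then show ?thesis using u assms(1) by simp
  qed
qed


lemma readm_iso:
  assumes wf: "rmqt_wf m X" and wf': "rmqt_wf m X'" and rd: "readm X = readm X'"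
  shows "rmqt_iso X X'"
proof -
  obtain B \<sigma> \<alpha> r S where X: "X = (B, \<sigma>, \<alpha>, r, S)" by (cases X) auto
  obtain B' \<sigma>' \<alpha>' r' S' where X': "X' = (B', \<sigma>', \<alpha>', r', S')" by (cases X') auto
  note w = mwf_props[OF wf[unfolded X]]
  note w' = mwf_props[OF wf'[unfolded X']]
  show ?thesis
  proof (cases r)
    case None
    then have B: "B = {}" using w(6) by simp
    show ?thesis
    proof (cases r')
      case None
      then have B': "B' = {}" using w'(6) by simp
      have "S = {}" using w(8) B unfolding map_edges_def by simp
      moreover have "S' = {}" using w'(8) B' unfolding map_edges_def by simp
      ultimately show ?thesis unfolding X X' rmqt_iso_def prod.case using B B' None \<open>r = None\<close>
        by (intro exI[of _ id]) simp
    next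
      case (Some x')
      have "B' \<noteq> {}" using w'(7)[OF Some] by auto
      then have "readm X' \<noteq> {}" unfolding X' readm_def Some by simp
      moreover have "readm X = {}" unfolding X readm_def None by simp
      ultimately show ?thesis using rd by simp
    qed
  next
    case (Some r0)
    note rS = Some
    show ?thesis
    proof (cases r')
      case None
      have "B \<noteq> {}" using w(7)[OF rS] by auto
      then have "readm X \<noteq> {}" unfolding X readm_def rS by simp
      moreover have "readm X' = {}" unfolding X' readm_def None by simp
      ultimately show ?thesis using rd by simp
    next
      case (Some r0')
      note rS' = Some
      define \<tau> where "\<tau> = tour \<sigma> \<alpha> S"
      define \<tau>' where "\<tau>' = tour \<sigma>' \<alpha>' S'"
      note o = mwf_orb[OF wf[unfolded X rS], folded \<tau>_def]
      note o' = mwf_orb[OF wf'[unfolded X' rS'], folded \<tau>'_def]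
      note ob' = mwf_orb_bij[OF wf'[unfolded X' rS'], folded \<tau>'_def]
      have cB: "card B' = card B" using w(5) w'(5) by simp
      define N where "N = card B"
      have N: "N > 0" using w(1) w(7)[OF rS] unfolding N_def by (simp add: card_gt_0_iff) blast
      define \<phi> where "\<phi> b = orb \<tau>' r0' (opos \<tau> r0 B b)" for b
      have aB: "\<alpha> b \<in> B" if "b \<in> B" for b using that permutes_in_image[OF w(3)] by simp
      have aB': "\<alpha>' b \<in> B'" if "b \<in> B'" for b using that permutes_in_image[OF w'(3)] by simp
      have bij: "bij_betw \<phi> B B'"
      proof -
        have "bij_betw (orb \<tau>' r0' \<circ> opos \<tau> r0 B) B B'"
          by (rule bij_betw_trans[OF o(5)]) (use ob' cB in simp)
        then show ?thesis unfolding \<phi>_def o_def by simp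
      qed
      have injphi: "inj_on \<phi> B" and imphi: "\<phi> ` B = B'" using bij unfolding bij_betw_def by auto
      have phiB: "\<phi> b \<in> B'" if "b \<in> B" for b using imphi that by blast
      have tphi: "\<phi> (\<tau> b) = \<tau>' (\<phi> b)" if b: "b \<in> B" for b
      proof -
        have "\<phi> (\<tau> b) = orb \<tau>' r0' (Suc (opos \<tau> r0 B b) mod N)" unfolding \<phi>_def N_def using o(3)[OF b] by simp
        also have "\<dots> = orb \<tau>' r0' (Suc (opos \<tau> r0 B b))" using orb_mod[OF o'(6)] cB N_def by simp
        also have "\<dots> = \<tau>' (\<phi> b)" unfolding \<phi>_def by (simp add: orb_Suc)
        finally show ?thesis .
      qed
      have rphi: "\<phi> r0 = r0'" unfolding \<phi>_def using o(4) by (simp add: orb_0)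
      have rkphi: "rk \<tau>' r0' B' (\<phi> b) = rk \<tau> r0 B b" if b: "b \<in> B" for b
        unfolding rk_def \<phi>_def using o'(2) o(1)[OF b] cB by simp
      note rb' = rk_bij[OF wf'[unfolded X' rS'], folded \<tau>'_def]
      have pr: "{\<phi> b, \<alpha>' (\<phi> b)} = {\<phi> b, \<phi> (\<alpha> b)} \<and> mcol S' {\<phi> b, \<alpha>' (\<phi> b)} = mcol S {b, \<alpha> b}"
        if b: "b \<in> B" for b
      proof -
        have "(rk \<tau> r0 B ` {b, \<alpha> b}, mcol S {b, \<alpha> b}) \<in> readm X"
          unfolding X readm_def rS \<tau>_def using b by simp
        then have "(rk \<tau> r0 B ` {b, \<alpha> b}, mcol S {b, \<alpha> b}) \<in> readm X'" using rd by simp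
        then obtain b' where b': "b' \<in> B'" "rk \<tau>' r0' B' ` {b', \<alpha>' b'} = rk \<tau> r0 B ` {b, \<alpha> b}"
            "mcol S' {b', \<alpha>' b'} = mcol S {b, \<alpha> b}"
          unfolding X' readm_def rS' \<tau>'_def by auto
        have "rk \<tau> r0 B ` {b, \<alpha> b} = rk \<tau>' r0' B' ` {\<phi> b, \<phi> (\<alpha> b)}"
          using rkphi[OF b] rkphi[OF aB[OF b]] by simp
        then have "rk \<tau>' r0' B' ` {b', \<alpha>' b'} = rk \<tau>' r0' B' ` {\<phi> b, \<phi> (\<alpha> b)}" using b'(2) by simp
        moreover have "{b', \<alpha>' b'} \<subseteq> B'" using b'(1) aB' by auto
        moreover have "{\<phi> b, \<phi> (\<alpha> b)} \<subseteq> B'" using phiB b aB by auto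
        ultimately have e: "{b', \<alpha>' b'} = {\<phi> b, \<phi> (\<alpha> b)}" using inj_on_image_eq_iff[OF rb'(1)] by blast
        have ne: "\<phi> b \<noteq> \<phi> (\<alpha> b)" using injphi b aB[OF b] w(4)[OF b] unfolding inj_on_def by metis
        have al: "\<alpha>' (\<phi> b) = \<phi> (\<alpha> b)" by (rule pair_alpha[of \<alpha>' b']) (use w'(4)[OF b'(1)] e ne in auto)
        have "{\<phi> b, \<alpha>' (\<phi> b)} = {b', \<alpha>' b'}" using e al by simp
        then show ?thesis using al b'(3) by simp
      qed
      have al: "\<alpha>' (\<phi> b) = \<phi> (\<alpha> b)" if b: "b \<in> B" for b
      proof -
        have "{\<phi> b, \<alpha>' (\<phi> b)} = {\<phi> b, \<phi> (\<alpha> b)}" using pr[OF b] by simp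
        moreover have "\<alpha>' (\<phi> b) \<noteq> \<phi> b" using w'(4)[OF phiB[OF b]] by simp
        ultimately show ?thesis by (metis doubleton_eq_iff)
      qed
      have eS: "{\<phi> b, \<alpha>' (\<phi> b)} \<in> S' \<longleftrightarrow> {b, \<alpha> b} \<in> S" if b: "b \<in> B" for b
        using pr[OF b] unfolding mcol_def by (auto split: if_splits)
      have sig: "\<sigma>' (\<phi> b) = \<phi> (\<sigma> b)" if b: "b \<in> B" for b
      proof (cases "{b, \<alpha> b} \<in> S")
        case True
        have "\<sigma>' (\<phi> b) = \<tau>' (\<alpha>' (\<phi> b))"
          using sigma_tour[of \<alpha>' "\<phi> b" \<sigma>' S'] w'(4)[OF phiB[OF b]] eS[OF b] True unfolding \<tau>'_def by simp
        also have "\<dots> = \<tau>' (\<phi> (\<alpha> b))" using al[OF b] by simp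
        also have "\<dots> = \<phi> (\<tau> (\<alpha> b))" using tphi[OF aB[OF b]] by simp
        also have "\<tau> (\<alpha> b) = \<sigma> b"
          using sigma_tour[of \<alpha> b \<sigma> S] w(4)[OF b] True unfolding \<tau>_def by simp
        finally show ?thesis .
      next
        case False
        have "\<sigma>' (\<phi> b) = \<tau>' (\<phi> b)"
          using sigma_tour[of \<alpha>' "\<phi> b" \<sigma>' S'] w'(4)[OF phiB[OF b]] eS[OF b] False unfolding \<tau>'_def by simp
        also have "\<dots> = \<phi> (\<tau> b)" using tphi[OF b] by simp
        also have "\<tau> b = \<sigma> b"
          using sigma_tour[of \<alpha> b \<sigma> S] w(4)[OF b] False unfolding \<tau>_def by simp
        finally show ?thesis .
      qed
      have SS: "S' = (\<lambda>e. \<phi> ` e) ` S"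
      proof
        show "S' \<subseteq> (\<lambda>e. \<phi> ` e) ` S"
        proof
          fix e' assume e': "e' \<in> S'"
          then obtain c' where c': "c' \<in> B'" "e' = {c', \<alpha>' c'}" using w'(8) unfolding map_edges_def by blast
          obtain c where c: "c \<in> B" "c' = \<phi> c" using c'(1) imphi by blast
          have "{c, \<alpha> c} \<in> S" using eS[OF c(1)] e' c c' by simp
          moreover have "e' = \<phi> ` {c, \<alpha> c}" using c c' al[OF c(1)] by simp
          ultimately show "e' \<in> (\<lambda>e. \<phi> ` e) ` S" by blast
        qed
        show "(\<lambda>e. \<phi> ` e) ` S \<subseteq> S'"
        proof
          fix e' assume "e' \<in> (\<lambda>e. \<phi> ` e) ` S"
          then obtain e where e: "e \<in> S" "e' = \<phi> ` e" by blast
          then obtain c where c: "c \<in> B" "e = {c, \<alpha> c}" using w(8) unfolding map_edges_def by blast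
          have "{\<phi> c, \<alpha>' (\<phi> c)} \<in> S'" using eS[OF c(1)] e c by simp
          moreover have "e' = {\<phi> c, \<alpha>' (\<phi> c)}" using e c al[OF c(1)] by simp
          ultimately show "e' \<in> S'" by simp
        qed
      qed
      show ?thesis unfolding X X' rmqt_iso_def prod.case
        using bij sig al rphi SS rS rS' by (intro exI[of _ \<phi>]) auto
    qed
  qed
qed


locale canon =
  fixes M :: "(nat set \<times> nat) set" and m :: nat
  assumes M: "M \<in> bicolored_ordered_matchings m" and mpos: "m > 0"
begin

abbreviation "N \<equiv> 2 * m"
abbreviation "BB \<equiv> {1..2*m}"

definition pk :: "nat \<Rightarrow> nat set \<times> nat" where
  "pk b = (THE u. u \<in> M \<and> b \<in> fst u)"

lemma mp: "finite M" "\<And>p k. (p, k) \<in> M \<Longrightarrow> p \<subseteq> {1..2*m} \<and> card p = 2 \<and> k \<in> {1, 2}"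
    "\<And>p q. p \<in> M \<Longrightarrow> q \<in> M \<Longrightarrow> p \<noteq> q \<Longrightarrow> fst p \<inter> fst q = {}"
    "\<Union>(fst ` M) = {1..2*m}" "card M = m"
  using matching_props[OF M] by auto

lemma pk_uniq: "u \<in> M \<Longrightarrow> v \<in> M \<Longrightarrow> b \<in> fst u \<Longrightarrow> b \<in> fst v \<Longrightarrow> u = v"
  using mp(3) by blast

lemma pk_props: assumes b: "b \<in> BB" shows "pk b \<in> M" "b \<in> fst (pk b)"
proof -
  obtain u where u: "u \<in> M" "b \<in> fst u" using b mp(4) by blast
  have "pk b = u" unfolding pk_def by (rule the_equality) (use u pk_uniq in blast)+
  then show "pk b \<in> M" "b \<in> fst (pk b)" using u by auto
qed

lemma pk_eq: "u \<in> M \<Longrightarrow> b \<in> fst u \<Longrightarrow> pk b = u"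
proof -
  assume u: "u \<in> M" "b \<in> fst u"
  have bB: "b \<in> BB" using u mp(4) by blast
  show "pk b = u" using pk_uniq[OF pk_props(1)[OF bB] u(1) pk_props(2)[OF bB] u(2)] .
qed

lemma fst_pk_sub: "b \<in> BB \<Longrightarrow> fst (pk b) \<subseteq> BB"
  using pk_props(1) mp(2) by (metis prod.collapse)

lemma fst_pk_card: "b \<in> BB \<Longrightarrow> card (fst (pk b)) = 2"
  using pk_props(1) mp(2) by (metis prod.collapse)

definition al :: "nat \<Rightarrow> nat" where
  "al b = (if b \<in> BB then (THE c. c \<in> fst (pk b) \<and> c \<noteq> b) else b)"

lemma al_props: assumes b: "b \<in> BB"
  shows "al b \<in> BB" "al b \<noteq> b" "fst (pk b) = {b, al b}"
proof -
  obtain x y where xy: "fst (pk b) = {x, y}" "x \<noteq> y" using fst_pk_card[OF b] card_2_iff by metis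
  have bin: "b \<in> {x, y}" using pk_props(2)[OF b] xy by simp
  obtain c where c: "fst (pk b) = {b, c}" "c \<noteq> b" using xy bin by (metis insert_commute insertE singletonD)
  have "al b = c" unfolding al_def using b c by (simp, intro the_equality) auto
  then show "fst (pk b) = {b, al b}" "al b \<noteq> b" using c by auto
  show "al b \<in> BB" using fst_pk_sub[OF b] c \<open>al b = c\<close> by auto
qed

lemma al_pk: assumes b: "b \<in> BB" shows "pk (al b) = pk b"
proof -
  have "al b \<in> fst (pk b)" using al_props(3)[OF b] by simp
  then show ?thesis by (rule pk_eq[OF pk_props(1)[OF b]])
qed

lemma al_al: assumes b: "b \<in> BB" shows "al (al b) = b"
proof -
  have a: "al b \<in> BB" by (rule al_props(1)[OF b])
  have "fst (pk (al b)) = {al b, al (al b)}" by (rule al_props(3)[OF a])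
  then have "{b, al b} = {al b, al (al b)}" using al_pk[OF b] al_props(3)[OF b] by simp
  then show ?thesis using al_props(2)[OF a] by (metis doubleton_eq_iff)
qed

lemma al_out: assumes "b \<notin> BB" shows "al b = b"
proof -
  have "\<not> (b \<in> BB)" using assms .
  then show ?thesis unfolding al_def by (simp only: if_False)
qed

lemma al_perm: "al permutes BB"
proof (rule bij_imp_permutes)
  have inj: "inj_on al BB" by (metis al_al inj_onI)
  have "al ` BB \<subseteq> BB" using al_props(1) by blast
  then have "al ` BB = BB" by (rule endo_inj_surj[OF finite_atLeastAtMost _ inj])
  then show "bij_betw al BB BB" using inj unfolding bij_betw_def by (intro conjI)
  show "\<And>x. x \<notin> BB \<Longrightarrow> al x = x" by (rule al_out)
qed

definition col :: "nat \<Rightarrow> nat" where "col b = snd (pk b)"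

definition SS :: "nat set set" where "SS = {p. (p, 2) \<in> M}"

lemma inS: assumes b: "b \<in> BB" shows "{b, al b} \<in> SS \<longleftrightarrow> col b = 2"
proof
  assume "{b, al b} \<in> SS"
  then have u: "({b, al b}, 2) \<in> M" unfolding SS_def by simp
  have "pk b = ({b, al b}, 2)" by (rule pk_eq[OF u]) simp
  then show "col b = 2" unfolding col_def by simp
next
  assume "col b = 2"
  then have "pk b = ({b, al b}, 2)" using al_props(3)[OF b] unfolding col_def by (metis prod.collapse)
  then show "{b, al b} \<in> SS" using pk_props(1)[OF b] unfolding SS_def by simp
qed

lemma col_al: "b \<in> BB \<Longrightarrow> col (al b) = col b"
  unfolding col_def using al_pk by simp

definition nxt :: "nat \<Rightarrow> nat" where
  "nxt b = (if b \<in> BB then (if b < 2 * m then Suc b else 1) else b)"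

lemma nxt_in: "b \<in> BB \<Longrightarrow> nxt b \<in> BB"
  unfolding nxt_def using mpos by auto

lemma nxt_perm: "nxt permutes BB"
proof (rule bij_imp_permutes)
  have inj: "inj_on nxt BB"
  proof
    fix x y assume x: "x \<in> BB" and y: "y \<in> BB" and e: "nxt x = nxt y"
    have "(if x < 2 * m then Suc x else 1) = (if y < 2 * m then Suc y else 1)"
      using e x y unfolding nxt_def by (simp only: if_True)
    then show "x = y" using x y by (cases "x < 2 * m"; cases "y < 2 * m") simp_all
  qed
  have "nxt ` BB \<subseteq> BB" using nxt_in by blast
  then have "nxt ` BB = BB" by (rule endo_inj_surj[OF finite_atLeastAtMost _ inj])
  then show "bij_betw nxt BB BB" using inj unfolding bij_betw_def by (intro conjI)
  show "\<And>x. x \<notin> BB \<Longrightarrow> nxt x = x"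
  proof -
    fix x assume x: "x \<notin> BB"
    show "nxt x = x" unfolding nxt_def by (rule if_not_P[OF x])
  qed
qed

definition gg :: "nat \<Rightarrow> nat" where
  "gg b = (if b \<in> BB \<and> col b = 2 then al b else b)"

lemma gg_perm: "gg permutes BB"
proof (rule bij_imp_permutes)
  have gin: "gg b \<in> BB" if "b \<in> BB" for b using that al_props(1) unfolding gg_def by auto
  have gg2: "gg (gg b) = b" if b: "b \<in> BB" for b
    using b al_al[OF b] col_al[OF b] al_props(1)[OF b] unfolding gg_def by auto
  have inj: "inj_on gg BB" by (metis gg2 inj_onI)
  have "gg ` BB \<subseteq> BB" using gin by blast
  then have "gg ` BB = BB" by (rule endo_inj_surj[OF finite_atLeastAtMost _ inj])
  then show "bij_betw gg BB BB" using inj unfolding bij_betw_def by (intro conjI)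
  show "\<And>x. x \<notin> BB \<Longrightarrow> gg x = x"
  proof -
    fix x assume x: "x \<notin> BB"
    then have "\<not> (x \<in> BB \<and> col x = 2)" by (intro notI) (elim conjE, simp)
    then show "gg x = x" unfolding gg_def by (rule if_not_P)
  qed
qed

definition sg :: "nat \<Rightarrow> nat" where "sg = nxt \<circ> gg"

lemma sg_perm: "sg permutes BB" unfolding sg_def by (rule permutes_compose[OF gg_perm nxt_perm])

lemma tour_nxt: assumes b: "b \<in> BB" shows "tour sg al SS b = nxt b"
proof (cases "col b = 2")
  case True
  have a: "al b \<in> BB" by (rule al_props(1)[OF b])
  have "tour sg al SS b = sg (al b)" using inS[OF b] True unfolding tour_def by simp
  also have "\<dots> = nxt (al (al b))" unfolding sg_def gg_def using a col_al[OF b] True by simp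
  finally show ?thesis using al_al[OF b] by simp
next
  case False
  have "tour sg al SS b = sg b" using inS[OF b] False unfolding tour_def by simp
  also have "\<dots> = nxt b" unfolding sg_def gg_def using False by simp
  finally show ?thesis .
qed

lemma nxt_pow: assumes b: "b \<in> BB" shows "(nxt ^^ n) b = (b - 1 + n) mod (2 * m) + 1"
proof (induction n)
  case 0
  have "b - 1 < 2 * m" using b by auto
  then have "(b - 1) mod (2 * m) = b - 1" by simp
  then show ?case using b by simp
next
  case (Suc n)
  define k where "k = (b - 1 + n) mod (2 * m)"
  have k: "k < 2 * m" unfolding k_def using mpos by simp
  have "(nxt ^^ Suc n) b = nxt (k + 1)" using Suc unfolding k_def by simp
  also have "\<dots> = (if Suc k = 2 * m then 0 else Suc k) + 1" unfolding nxt_def using k by auto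
  also have "\<dots> = (b - 1 + Suc n) mod (2 * m) + 1" unfolding k_def by (simp add: mod_Suc)
  finally show ?case .
qed

lemma nxt_pow_in: assumes b: "b \<in> BB" shows "(nxt ^^ n) b \<in> BB"
proof -
  have "(b - 1 + n) mod (2 * m) < 2 * m" using mpos by simp
  then show ?thesis unfolding nxt_pow[OF b] by simp
qed

lemma tour_pow: assumes b: "b \<in> BB" shows "(tour sg al SS ^^ n) b = (nxt ^^ n) b"
proof (induction n)
  case 0 then show ?case by simp
next
  case (Suc n)
  have "(nxt ^^ n) b \<in> BB" by (rule nxt_pow_in[OF b])
  then show ?case using Suc tour_nxt by simp
qed

lemma reach: assumes b: "b \<in> BB" and b': "b' \<in> BB" shows "(nxt ^^ (2 * m + b' - b)) b = b'"
proof -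
  have e1: "b - 1 + (2 * m + b' - b) = 2 * m + (b' - 1)" using b b' by auto
  have "b' - 1 < 2 * m" using b' by auto
  then have e2: "(2 * m + (b' - 1)) mod (2 * m) = b' - 1" by (metis mod_add_self1 mod_less)
  have e3: "b' - 1 + 1 = b'" using b' by auto
  show ?thesis unfolding nxt_pow[OF b] e1 e2 e3 ..
qed

definition XX :: map_qt where "XX = (BB, sg, al, Some 1, SS)"

lemma XX_wf: "rmqt_wf m XX"
  unfolding rmqt_wf_def XX_def prod.case option.case
proof (intro conjI)
  let ?E = "{(x, sg x) | x. x \<in> BB} \<union> {(x, al x) | x. x \<in> BB}"
  have step: "(b, nxt b) \<in> ?E\<^sup>*" if b: "b \<in> BB" for b
  proof (cases "col b = 2")
    case True
    have a: "al b \<in> BB" by (rule al_props(1)[OF b])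
    have "sg (al b) = nxt b" unfolding sg_def gg_def using a col_al[OF b] True al_al[OF b] by simp
    have "(al b, sg (al b)) \<in> ?E" by (intro UnI1 CollectI exI[of _ "al b"] conjI refl a)
    then have 1: "(al b, nxt b) \<in> ?E" using \<open>sg (al b) = nxt b\<close> by simp
    have 2: "(b, al b) \<in> ?E" by (intro UnI2 CollectI exI[of _ b] conjI refl b)
    show ?thesis by (rule converse_rtrancl_into_rtrancl[OF 2 r_into_rtrancl[OF 1]])
  next
    case False
    have "sg b = nxt b" unfolding sg_def gg_def using False by simp
    have "(b, sg b) \<in> ?E" by (intro UnI1 CollectI exI[of _ b] conjI refl b)
    then have "(b, nxt b) \<in> ?E" using \<open>sg b = nxt b\<close> by simp
    then show ?thesis by (rule r_into_rtrancl)
  qed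
  have steps: "(b, (nxt ^^ n) b) \<in> ?E\<^sup>*" if b: "b \<in> BB" for b n
  proof (induction n)
    case 0 then show ?case by simp
  next
    case (Suc n)
    have "(nxt ^^ n) b \<in> BB" by (rule nxt_pow_in[OF b])
    then have "((nxt ^^ n) b, (nxt ^^ Suc n) b) \<in> ?E\<^sup>*" using step by simp
    then show ?case by (rule rtrancl_trans[OF Suc])
  qed
  show "is_map BB sg al" unfolding is_map_def
  proof (intro conjI)
    show "finite BB" by simp
    show "sg permutes BB" by (rule sg_perm)
    show "al permutes BB" by (rule al_perm)
    show "\<forall>b\<in>BB. al b \<noteq> b \<and> al (al b) = b" using al_props(2) al_al by blast
    show "\<forall>b\<in>BB. \<forall>b'\<in>BB. (b, b') \<in> ?E\<^sup>*"
    proof (intro ballI)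
      fix b b' assume b: "b \<in> BB" and b': "b' \<in> BB"
      show "(b, b') \<in> ?E\<^sup>*" using steps[OF b, of "2 * m + b' - b"] reach[OF b b'] by simp
    qed
  qed
  show "card BB = 2 * m" by simp
  show "1 \<in> BB" using mpos by simp
  show "is_quasi_tree BB sg al SS" unfolding is_quasi_tree_def
  proof (intro conjI ballI)
    show "SS \<subseteq> map_edges BB al"
    proof
      fix e assume "e \<in> SS"
      then have u: "(e, 2) \<in> M" unfolding SS_def by simp
      then have "e \<noteq> {}" "e \<subseteq> BB" using mp(2)[OF u] by auto
      then obtain b where b: "b \<in> e" "b \<in> BB" by blast
      have "pk b = (e, 2)" by (rule pk_eq[OF u]) (use b in simp)
      then have "e = {b, al b}" using al_props(3)[OF b(2)] by simp
      then show "e \<in> map_edges BB al" unfolding map_edges_def by (intro CollectI exI[of _ b] conjI b(2))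
    qed
    fix b b' assume b: "b \<in> BB" and b': "b' \<in> BB"
    show "\<exists>n. (tour sg al SS ^^ n) b = b'"
      using tour_pow[OF b] reach[OF b b'] by metis
  qed
qed

lemma XX_read: "readm XX = M"
proof -
  note o = mwf_orb[OF XX_wf[unfolded XX_def]]
  have orbn: "orb (tour sg al SS) 1 n = n mod (2 * m) + 1" for n
    unfolding orb_def using tour_pow[of 1 n] nxt_pow[of 1 n] mpos by simp
  have rk: "rk (tour sg al SS) 1 BB b = b" if b: "b \<in> BB" for b
  proof -
    have "b - 1 < card BB" using b by auto
    then have "opos (tour sg al SS) 1 BB (orb (tour sg al SS) 1 (b - 1)) = b - 1" by (rule o(2))
    moreover have "orb (tour sg al SS) 1 (b - 1) = b" unfolding orbn using b by auto
    ultimately show ?thesis unfolding rk_def using b by simp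
  qed
  have G: "(rk (tour sg al SS) 1 BB ` {b, al b}, mcol SS {b, al b}) = pk b" if b: "b \<in> BB" for b
  proof -
    have "rk (tour sg al SS) 1 BB ` {b, al b} = {b, al b}" using rk b al_props(1)[OF b] by simp
    moreover have "mcol SS {b, al b} = col b"
      using inS[OF b] mp(2)[of "fst (pk b)" "snd (pk b)"] pk_props(1)[OF b] unfolding mcol_def col_def by auto
    ultimately show ?thesis using al_props(3)[OF b] unfolding col_def by (metis prod.collapse)
  qed
  have "readm XX = (\<lambda>b. (rk (tour sg al SS) 1 BB ` {b, al b}, mcol SS {b, al b})) ` BB"
    unfolding readm_def XX_def by simp
  also have "\<dots> = pk ` BB" using G by (intro image_cong) auto
  also have "\<dots> = M"
  proof
    show "pk ` BB \<subseteq> M" using pk_props(1) by blast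
    show "M \<subseteq> pk ` BB"
    proof
      fix u assume u: "u \<in> M"
      obtain p k where pk': "u = (p, k)" by (cases u)
      have "p \<noteq> {}" "p \<subseteq> BB" using mp(2)[of p k] u pk' by auto
      then obtain b where b: "b \<in> p" "b \<in> BB" by blast
      have "pk b = u" by (rule pk_eq[OF u]) (use b pk' in simp)
      then show "u \<in> pk ` BB" using b by blast
    qed
  qed
  finally show ?thesis .
qed

end

lemma readm_surj:
  assumes M: "M \<in> bicolored_ordered_matchings m"
  shows "\<exists>X. rmqt_wf m X \<and> readm X = M"
proof (cases "m = 0")
  case True
  have "M = {}"
  proof (rule ccontr)
    assume "M \<noteq> {}"
    then obtain p k where "(p, k) \<in> M" by auto
    then have "p \<subseteq> {}" "card p = 2" using matching_props(2)[OF M] True by auto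
    then show False by simp
  qed
  moreover have "rmqt_wf 0 ({}, id, id, None, {})"
    unfolding rmqt_wf_def is_map_def is_quasi_tree_def map_edges_def by simp
  ultimately show ?thesis using True by (intro exI[of _ "({}, id, id, None, {})"]) (simp add: readm_def)
next
  case False
  interpret canon M m using M False by unfold_locales simp_all
  show ?thesis using XX_wf XX_read by blast
qed

lemma map_part: "\<exists>g. bij_betw g (bicolored_ordered_matchings m) (rooted_maps_with_quasi_tree m)"
proof -
  have "\<exists>f. bij_betw f (rooted_maps_with_quasi_tree m) (bicolored_ordered_matchings m)"
    unfolding rooted_maps_with_quasi_tree_def
  proof (rule class_bij[where rd = readm])
    show "\<And>X. rmqt_wf m X \<Longrightarrow> readm X \<in> bicolored_ordered_matchings m" by (rule readm_in)
    show "\<And>X Y. rmqt_wf m X \<Longrightarrow> rmqt_wf m Y \<Longrightarrow> rmqt_iso X Y \<longleftrightarrow> readm X = readm Y"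
      using iso_readm readm_iso by blast
    show "\<And>M. M \<in> bicolored_ordered_matchings m \<Longrightarrow> \<exists>X. rmqt_wf m X \<and> readm X = M"
      by (rule readm_surj)
  qed
  then obtain f where "bij_betw f (rooted_maps_with_quasi_tree m) (bicolored_ordered_matchings m)" by blast
  then show ?thesis using bij_betw_inv_into by blast
qed


theorem lemma12:
  fixes m :: nat
  shows "(\<exists>f. bij_betw f (rooted_bicolored_chord_diagrams m) (bicolored_ordered_matchings m)) \<and>
         (\<exists>g. bij_betw g (bicolored_ordered_matchings m) (rooted_maps_with_quasi_tree m))"
  using chord_part[of m] map_part[of m] by (rule conjI)

end
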